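(* Let $\Omega\subset\mathbb H^n$ be open, meeting $\{x^n=0\}$, $\Gamma=\Omega\cap\{x^n=0\}$, and let $H_1,H_2$ be smooth Riemannian metrics on $\Omega$ of the form $H_i=(dx^n)^2+h_i(x',x^n)$ with $H_1=H_2+\mathcal O((x^n)^\infty)$ on $\Gamma$. For $l=1,\dots,n+1$ let $f^l_1,f^l_2$ be functions on $\Omega$ with $L_{H_i}f^l_i=0$ in $\{x^n>0\}\cap\Omega$ and with $f^l_1=f^l_2$, $\partial_{x^n}f^l_1=\partial_{x^n}f^l_2$ on $\Gamma$ (these Cauchy data being $C^\infty$), and with $f^{n+1}_i$ nonvanishing. Set $Z^l_i=f^l_i/f^{n+1}_i$ for $l=1,\dots,n$, and $Z_i=(Z^1_i,\dots,Z^n_i)$. Then $Z_1=Z_2+\mathcal O((x^n)^\infty)$ on $\Gamma$. In particular, if the $Z_i$ are coordinate systems and $J_x(H_1)=J_x(H_2)$ for $x\in\Gamma$, then $J_x((Z_1^{-1})^*H_1)=J_x((Z_2^{-1})^*H_2)$ at the corresponding boundary points $x=Z_1(x)=Z_2(x)$.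
   Context: $\mathbb H^n=\{(x',x^n):x^n\ge0\}$; $L_H$ is the conformal Laplacian $-\Delta_H+\frac{n-2}{4(n-1)}S_H$. "$A=B+\mathcal O((x^n)^\infty)$ on $\Gamma$" means all $x^n$-derivatives of $A-B$ vanish on $\Gamma$. $J_x(S)$, the jet of a tensor field $S$ at $x$, is the collection of Taylor coefficients at $x$ of its coordinate representation. *)

theory Defs
  imports "HOL-Analysis.Analysis"
begin

text \<open>Points of R^n are vectors real^'n (n = CARD('n)). One index N :: 'n plays the
role of the normal coordinate x^n.\<close>

definition halfspace :: "'n \<Rightarrow> (real^'n) set" where
  "halfspace N = {x. x $ N \<ge> 0}"

definition pd :: "'n \<Rightarrow> (real^'n \<Rightarrow> real) \<Rightarrow> real^'n \<Rightarrow> real" where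
  "pd i f x = vector_derivative (\<lambda>t. f (x + t *\<^sub>R axis i 1)) (at 0)"

fun ipd :: "'n list \<Rightarrow> (real^'n \<Rightarrow> real) \<Rightarrow> real^'n \<Rightarrow> real" where
  "ipd [] f = f"
| "ipd (i # is) f = pd i (ipd is f)"

text \<open>Taylor coefficient (derivative d_is f) of f at a point x of S, obtained as the
limit of the derivative from the interior of S (this is the value at x of the continuous
extension of the derivative; it coincides with the usual derivative at interior points).\<close>
definition jc :: "(real^'n) set \<Rightarrow> 'n list \<Rightarrow> (real^'n \<Rightarrow> real) \<Rightarrow> real^'n \<Rightarrow> real" where
  "jc S is f x = Lim (at x within interior S) (ipd is f)"

definition smooth_upto :: "(real^'n) set \<Rightarrow> (real^'n \<Rightarrow> real) \<Rightarrow> bool" where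
  "smooth_upto S f \<longleftrightarrow>
     S \<subseteq> closure (interior S) \<and>
     (\<forall>is i. \<forall>x\<in>interior S. (\<lambda>t. ipd is f (x + t *\<^sub>R axis i 1)) differentiable (at 0)) \<and>
     (\<forall>is. continuous_on (interior S) (ipd is f)) \<and>
     (\<forall>is. \<forall>x\<in>S. \<exists>L. (ipd is f \<longlongrightarrow> L) (at x within interior S)) \<and>
     (\<forall>x\<in>S. (f \<longlongrightarrow> f x) (at x within interior S))"

definition riem_metric :: "(real^'n) set \<Rightarrow> (real^'n \<Rightarrow> real^'n^'n) \<Rightarrow> bool" where
  "riem_metric S H \<longleftrightarrow>
     (\<forall>i j. smooth_upto S (\<lambda>x. H x $ i $ j)) \<and>
     (\<forall>x\<in>S. transpose (H x) = H x \<and> (\<forall>v. v \<noteq> 0 \<longrightarrow> v \<bullet> (H x *v v) > 0))"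

text \<open>H = (dx^N)^2 + h(x', x^N), h without dx^N components.\<close>
definition normal_form :: "'n \<Rightarrow> (real^'n) set \<Rightarrow> (real^'n \<Rightarrow> real^'n^'n) \<Rightarrow> bool" where
  "normal_form N S H \<longleftrightarrow>
     (\<forall>x\<in>S. H x $ N $ N = 1 \<and> (\<forall>i. i \<noteq> N \<longrightarrow> H x $ N $ i = 0 \<and> H x $ i $ N = 0))"

definition ginv :: "(real^'n \<Rightarrow> real^'n^'n) \<Rightarrow> real^'n \<Rightarrow> real^'n^'n" where
  "ginv H x = matrix_inv (H x)"

definition chr :: "(real^'n \<Rightarrow> real^'n^'n) \<Rightarrow> 'n \<Rightarrow> 'n \<Rightarrow> 'n \<Rightarrow> real^'n \<Rightarrow> real" where
  "chr H k i j x = (1/2) * (\<Sum>l\<in>UNIV. ginv H x $ k $ l *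
      (pd i (\<lambda>y. H y $ j $ l) x + pd j (\<lambda>y. H y $ i $ l) x - pd l (\<lambda>y. H y $ i $ j) x))"

definition ricci :: "(real^'n \<Rightarrow> real^'n^'n) \<Rightarrow> 'n \<Rightarrow> 'n \<Rightarrow> real^'n \<Rightarrow> real" where
  "ricci H i j x = (\<Sum>k\<in>UNIV. pd k (chr H k i j) x - pd j (chr H k i k) x
      + (\<Sum>l\<in>UNIV. chr H k k l x * chr H l i j x - chr H k j l x * chr H l i k x))"

definition scal :: "(real^'n \<Rightarrow> real^'n^'n) \<Rightarrow> real^'n \<Rightarrow> real" where
  "scal H x = (\<Sum>i\<in>UNIV. \<Sum>j\<in>UNIV. ginv H x $ i $ j * ricci H i j x)"

definition lap :: "(real^'n \<Rightarrow> real^'n^'n) \<Rightarrow> (real^'n \<Rightarrow> real) \<Rightarrow> real^'n \<Rightarrow> real" where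
  "lap H f x = (\<Sum>i\<in>UNIV. \<Sum>j\<in>UNIV. ginv H x $ i $ j *
      (pd i (pd j f) x - (\<Sum>k\<in>UNIV. chr H k i j x * pd k f x)))"

definition conf_lap :: "(real^'n \<Rightarrow> real^'n^'n) \<Rightarrow> (real^'n \<Rightarrow> real) \<Rightarrow> real^'n \<Rightarrow> real" where
  "conf_lap H f x = - lap H f x
      + (real CARD('n) - 2) / (4 * (real CARD('n) - 1)) * scal H x * f x"

text \<open>A = O((x^N)^infinity) on the boundary part of S: all x^N-derivatives of A vanish there.\<close>
definition flat_bdry :: "'n \<Rightarrow> (real^'n) set \<Rightarrow> (real^'n \<Rightarrow> real) \<Rightarrow> bool" where
  "flat_bdry N S A \<longleftrightarrow> (\<forall>k. \<forall>x\<in>S. x $ N = 0 \<longrightarrow> jc S (replicate k N) A x = 0)"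

definition coord_system :: "(real^'n) set \<Rightarrow> (real^'n \<Rightarrow> real^'n) \<Rightarrow> bool" where
  "coord_system S Z \<longleftrightarrow> inj_on Z S \<and> (\<forall>l. smooth_upto S (\<lambda>x. Z x $ l)) \<and>
     (\<forall>l. smooth_upto (Z ` S) (\<lambda>y. inv_into S Z y $ l))"

text \<open>Pushforward metric (Z^{-1})^* H on Z ` S, in the coordinates y = Z x.\<close>
definition push_metric :: "(real^'n) set \<Rightarrow> (real^'n \<Rightarrow> real^'n) \<Rightarrow> (real^'n \<Rightarrow> real^'n^'n)
    \<Rightarrow> real^'n \<Rightarrow> real^'n^'n" where
  "push_metric S Z H y = (\<chi> a b. \<Sum>i\<in>UNIV. \<Sum>j\<in>UNIV.
      pd a (\<lambda>y. inv_into S Z y $ i) y * pd b (\<lambda>y. inv_into S Z y $ j) y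
      * H (inv_into S Z y) $ i $ j)"

end

theory Submission
  imports Defs
begin


lemma ipd_append: "ipd (is @ js) f = ipd is (ipd js f)"
  by (induction "is") auto

definition lined :: "(real^'n \<Rightarrow> real) \<Rightarrow> real^'n \<Rightarrow> 'n \<Rightarrow> bool" where
  "lined f x i \<longleftrightarrow> (\<lambda>t. f (x + t *\<^sub>R axis i 1)) differentiable (at 0)"

lemma ev_line_in_open:
  fixes x :: "real^'n"
  assumes "open U" "x \<in> U"
  shows "eventually (\<lambda>t. x + t *\<^sub>R v \<in> U) (nhds (0::real))"
proof -
  have "open {t::real. x + t *\<^sub>R v \<in> U}"
    using continuous_open_vimage[OF assms(1), of "\<lambda>t::real. x + t *\<^sub>R v"]
    by (simp add: vimage_def continuous_intros)
  moreover have "0 \<in> {t::real. x + t *\<^sub>R v \<in> U}" using assms by simp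
  ultimately show ?thesis unfolding eventually_nhds by blast
qed

lemma pd_local:
  assumes "open U" "x \<in> U" "\<And>y. y \<in> U \<Longrightarrow> f y = g y"
  shows "pd i f x = pd i g x"
proof -
  have "eventually (\<lambda>t. t \<in> UNIV \<longrightarrow> f (x + t *\<^sub>R axis i 1) = g (x + t *\<^sub>R axis i 1)) (nhds 0)"
    using ev_line_in_open[OF assms(1,2), of "axis i 1"] by eventually_elim (use assms(3) in auto)
  then show ?thesis unfolding pd_def
    by (intro vector_derivative_cong_eq) auto
qed

lemma lined_local:
  assumes "open U" "x \<in> U" "\<And>y. y \<in> U \<Longrightarrow> f y = g y" "lined f x i"
  shows "lined g x i"
proof -
  have ev: "eventually (\<lambda>t. t \<in> UNIV \<longrightarrow> f (x + t *\<^sub>R axis i 1) = g (x + t *\<^sub>R axis i 1)) (nhds 0)"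
    using ev_line_in_open[OF assms(1,2), of "axis i 1"] by eventually_elim (use assms(3) in auto)
  have e0: "f (x + 0 *\<^sub>R axis i 1) = g (x + 0 *\<^sub>R axis i 1)" using assms(2,3) by simp
  from assms(4) have "((\<lambda>t. f (x + t *\<^sub>R axis i 1)) has_vector_derivative
       vector_derivative (\<lambda>t. f (x + t *\<^sub>R axis i 1)) (at 0)) (at 0)"
    unfolding lined_def using vector_derivative_works by blast
  then have "((\<lambda>t. g (x + t *\<^sub>R axis i 1)) has_vector_derivative
       vector_derivative (\<lambda>t. f (x + t *\<^sub>R axis i 1)) (at 0)) (at 0)"
    using has_vector_derivative_cong_ev[OF ev e0] by simp
  then show ?thesis unfolding lined_def using differentiableI_vector by blast
qed

lemma ipd_local:
  assumes "open U" "\<And>y. y \<in> U \<Longrightarrow> f y = g y" "x \<in> U"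
  shows "ipd is f x = ipd is g x"
  using assms(3)
proof (induction "is" arbitrary: x)
  case Nil then show ?case using assms by simp
next
  case (Cons i "is")
  have "pd i (ipd is f) x = pd i (ipd is g) x"
    by (rule pd_local[OF assms(1) Cons.prems]) (rule Cons.IH)
  then show ?case by simp
qed


lemma notbot_within_open:
  fixes x :: "'a::perfect_space"
  assumes "open U" "x \<in> closure U"
  shows "at x within U \<noteq> bot"
proof (cases "x \<in> U")
  case True then show ?thesis using at_within_open[OF True assms(1)] by simp
next
  case False then have "U - {x} = U" by auto
  then show ?thesis using assms(2) by (simp add: at_within_eq_bot_iff)
qed

lemma lined_hvd:
  "lined f x i \<Longrightarrow> ((\<lambda>t. f (x + t *\<^sub>R axis i 1)) has_vector_derivative pd i f x) (at 0)"
  unfolding lined_def pd_def using vector_derivative_works by blast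

lemma pd_eqI:
  "((\<lambda>t. f (x + t *\<^sub>R axis i 1)) has_vector_derivative D) (at 0) \<Longrightarrow> pd i f x = D"
  unfolding pd_def by (rule vector_derivative_at)

lemma linedI:
  "((\<lambda>t. f (x + t *\<^sub>R axis i 1)) has_vector_derivative D) (at 0) \<Longrightarrow> lined f x i"
  unfolding lined_def using differentiableI_vector by blast

lemma pd_add:
  assumes "lined f x i" "lined g x i"
  shows "lined (\<lambda>y. f y + g y) x i" "pd i (\<lambda>y. f y + g y) x = pd i f x + pd i g x"
proof -
  have "((\<lambda>t. f (x + t *\<^sub>R axis i 1) + g (x + t *\<^sub>R axis i 1)) has_vector_derivative pd i f x + pd i g x) (at 0)"
    by (intro has_vector_derivative_add lined_hvd assms)
  then show "lined (\<lambda>y. f y + g y) x i" "pd i (\<lambda>y. f y + g y) x = pd i f x + pd i g x"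
    by (auto intro: linedI pd_eqI)
qed

lemma pd_diff:
  assumes "lined f x i" "lined g x i"
  shows "lined (\<lambda>y. f y - g y) x i" "pd i (\<lambda>y. f y - g y) x = pd i f x - pd i g x"
proof -
  have "((\<lambda>t. f (x + t *\<^sub>R axis i 1) - g (x + t *\<^sub>R axis i 1)) has_vector_derivative pd i f x - pd i g x) (at 0)"
    by (intro has_vector_derivative_diff lined_hvd assms)
  then show "lined (\<lambda>y. f y - g y) x i" "pd i (\<lambda>y. f y - g y) x = pd i f x - pd i g x"
    by (auto intro: linedI pd_eqI)
qed

lemma pd_mult:
  assumes "lined f x i" "lined g x i"
  shows "lined (\<lambda>y. f y * g y) x i" "pd i (\<lambda>y. f y * g y) x = pd i f x * g x + f x * pd i g x"
proof -
  have "((\<lambda>t. f (x + t *\<^sub>R axis i 1) * g (x + t *\<^sub>R axis i 1)) has_vector_derivative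
       f (x + 0 *\<^sub>R axis i 1) * pd i g x + pd i f x * g (x + 0 *\<^sub>R axis i 1)) (at 0)"
    by (intro has_vector_derivative_mult lined_hvd assms)
  then have *: "((\<lambda>t. f (x + t *\<^sub>R axis i 1) * g (x + t *\<^sub>R axis i 1)) has_vector_derivative
       pd i f x * g x + f x * pd i g x) (at 0)" by (simp add: algebra_simps)
  show "lined (\<lambda>y. f y * g y) x i" by (rule linedI[OF *])
  show "pd i (\<lambda>y. f y * g y) x = pd i f x * g x + f x * pd i g x" by (rule pd_eqI[OF *])
qed

lemma pd_const: "lined (\<lambda>y. c) x i" "pd i (\<lambda>y. c) x = 0"
proof -
  have *: "((\<lambda>t. c) has_vector_derivative 0) (at 0)" by (rule has_vector_derivative_const)
  show "lined (\<lambda>y. c) x i" by (rule linedI) (rule *)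
  show "pd i (\<lambda>y. c) x = 0" by (rule pd_eqI) (rule *)
qed

lemma ipd_const_Cons: "ipd (i # is) (\<lambda>y. c) = (\<lambda>y. 0)"
proof (induction "is" arbitrary: i)
  case Nil then show ?case by (simp add: pd_const fun_eq_iff)
next
  case (Cons j "is")
  have "ipd (i # j # is) (\<lambda>y. c) = pd i (ipd (j # is) (\<lambda>y. c))" by (simp only: ipd.simps)
  also have "\<dots> = pd i (\<lambda>y. 0)" by (simp only: Cons.IH)
  finally show ?case by (simp add: pd_const fun_eq_iff)
qed

lemma ipd_const: "ipd is (\<lambda>y. c) = (if is = [] then (\<lambda>y. c) else (\<lambda>y. 0))"
  by (cases "is") (simp_all only: ipd_const_Cons ipd.simps, simp_all)

definition good :: "(real^'n) set \<Rightarrow> (real^'n \<Rightarrow> real) \<Rightarrow> bool" where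
  "good S k \<longleftrightarrow> (\<forall>i. \<forall>x\<in>interior S. lined k x i) \<and> continuous_on (interior S) k \<and>
     (\<forall>x\<in>S. \<exists>L. (k \<longlongrightarrow> L) (at x within interior S))"

definition CS :: "(real^'n) set \<Rightarrow> (real^'n \<Rightarrow> real) \<Rightarrow> bool" where
  "CS S f \<longleftrightarrow> (\<forall>is. good S (ipd is f))"

lemma smooth_upto_alt:
  "smooth_upto S f \<longleftrightarrow> S \<subseteq> closure (interior S) \<and> CS S f \<and> (\<forall>x\<in>S. (f \<longlongrightarrow> f x) (at x within interior S))"
  unfolding smooth_upto_def CS_def good_def lined_def by blast

lemma goodD:
  assumes "good S f"
  shows "\<And>x i. x \<in> interior S \<Longrightarrow> lined f x i" "continuous_on (interior S) f"
    "\<And>x. x \<in> S \<Longrightarrow> \<exists>L. (f \<longlongrightarrow> L) (at x within interior S)"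
  using assms unfolding good_def by simp_all

lemma goodI:
  assumes "\<And>x i. x \<in> interior S \<Longrightarrow> lined f x i" "continuous_on (interior S) f"
    "\<And>x. x \<in> S \<Longrightarrow> \<exists>L. (f \<longlongrightarrow> L) (at x within interior S)"
  shows "good S f"
  using assms unfolding good_def by simp

lemma good_local:
  assumes eq: "\<And>y. y \<in> interior S \<Longrightarrow> f y = g y" and gf: "good S f"
  shows "good S g"
proof (rule goodI)
  show "lined g x i" if "x \<in> interior S" for x i
  proof (rule lined_local[OF open_interior that])
    show "f y = g y" if "y \<in> interior S" for y using eq[OF that] .
    show "lined f x i" using goodD(1)[OF gf that] .
  qed
  have "continuous_on (interior S) f = continuous_on (interior S) g"
    by (rule continuous_on_cong) (auto simp: eq)
  then show "continuous_on (interior S) g" using goodD(2)[OF gf] by simp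
  show "\<exists>L. (g \<longlongrightarrow> L) (at x within interior S)" if xS: "x \<in> S" for x
  proof -
    obtain L where L: "(f \<longlongrightarrow> L) (at x within interior S)" using goodD(3)[OF gf xS] by blast
    have "(f \<longlongrightarrow> L) (at x within interior S) = (g \<longlongrightarrow> L) (at x within interior S)"
      by (rule Lim_cong_within) (auto simp: eq)
    then show ?thesis using L by blast
  qed
qed

lemma good_add:
  assumes "good S f" "good S g" shows "good S (\<lambda>y. f y + g y)"
proof (rule goodI)
  show "lined (\<lambda>y. f y + g y) x i" if "x \<in> interior S" for x i
    by (rule pd_add(1)) (use goodD(1)[OF assms(1) that] goodD(1)[OF assms(2) that] in auto)
  show "continuous_on (interior S) (\<lambda>y. f y + g y)"
    using goodD(2)[OF assms(1)] goodD(2)[OF assms(2)] by (intro continuous_intros)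
  show "\<exists>L. ((\<lambda>y. f y + g y) \<longlongrightarrow> L) (at x within interior S)" if xS: "x \<in> S" for x
  proof -
    obtain L1 where "(f \<longlongrightarrow> L1) (at x within interior S)" using goodD(3)[OF assms(1) xS] by blast
    moreover obtain L2 where "(g \<longlongrightarrow> L2) (at x within interior S)" using goodD(3)[OF assms(2) xS] by blast
    ultimately have "((\<lambda>y. f y + g y) \<longlongrightarrow> L1 + L2) (at x within interior S)" by (rule tendsto_add)
    then show ?thesis by blast
  qed
qed

lemma good_diff:
  assumes "good S f" "good S g" shows "good S (\<lambda>y. f y - g y)"
proof (rule goodI)
  show "lined (\<lambda>y. f y - g y) x i" if "x \<in> interior S" for x i
    by (rule pd_diff(1)) (use goodD(1)[OF assms(1) that] goodD(1)[OF assms(2) that] in auto)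
  show "continuous_on (interior S) (\<lambda>y. f y - g y)"
    using goodD(2)[OF assms(1)] goodD(2)[OF assms(2)] by (intro continuous_intros)
  show "\<exists>L. ((\<lambda>y. f y - g y) \<longlongrightarrow> L) (at x within interior S)" if xS: "x \<in> S" for x
  proof -
    obtain L1 where "(f \<longlongrightarrow> L1) (at x within interior S)" using goodD(3)[OF assms(1) xS] by blast
    moreover obtain L2 where "(g \<longlongrightarrow> L2) (at x within interior S)" using goodD(3)[OF assms(2) xS] by blast
    ultimately have "((\<lambda>y. f y - g y) \<longlongrightarrow> L1 - L2) (at x within interior S)" by (rule tendsto_diff)
    then show ?thesis by blast
  qed
qed

lemma good_mult:
  assumes "good S f" "good S g" shows "good S (\<lambda>y. f y * g y)"
proof (rule goodI)
  show "lined (\<lambda>y. f y * g y) x i" if "x \<in> interior S" for x i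
    by (rule pd_mult(1)) (use goodD(1)[OF assms(1) that] goodD(1)[OF assms(2) that] in auto)
  show "continuous_on (interior S) (\<lambda>y. f y * g y)"
    using goodD(2)[OF assms(1)] goodD(2)[OF assms(2)] by (intro continuous_intros)
  show "\<exists>L. ((\<lambda>y. f y * g y) \<longlongrightarrow> L) (at x within interior S)" if xS: "x \<in> S" for x
  proof -
    obtain L1 where "(f \<longlongrightarrow> L1) (at x within interior S)" using goodD(3)[OF assms(1) xS] by blast
    moreover obtain L2 where "(g \<longlongrightarrow> L2) (at x within interior S)" using goodD(3)[OF assms(2) xS] by blast
    ultimately have "((\<lambda>y. f y * g y) \<longlongrightarrow> L1 * L2) (at x within interior S)" by (rule tendsto_mult)
    then show ?thesis by blast
  qed
qed

lemma good_const: "good S (\<lambda>y. c)"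
  by (rule goodI) (auto intro!: continuous_intros pd_const)

lemma CS_pd: "CS S f \<Longrightarrow> CS S (pd i f)"
  unfolding CS_def by (metis ipd_append ipd.simps append_Nil2 ipd.simps(1))

lemma CS_ipd: "CS S f \<Longrightarrow> CS S (ipd js f)"
  unfolding CS_def by (metis ipd_append)

lemma CS_good: "CS S f \<Longrightarrow> good S f"
  unfolding CS_def by (metis ipd.simps(1))

lemma CS_local:
  assumes "\<And>y. y \<in> interior S \<Longrightarrow> f y = g y" "CS S f"
  shows "CS S g"
  unfolding CS_def
proof
  fix "is"
  have "\<And>y. y \<in> interior S \<Longrightarrow> ipd is f y = ipd is g y"
    by (rule ipd_local[OF open_interior]) (use assms(1) in auto)
  then show "good S (ipd is g)" using good_local assms(2) unfolding CS_def by blast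
qed

lemma CS_const: "CS S (\<lambda>y. c)"
  unfolding CS_def by (auto simp: ipd_const good_const)

lemma ipd_add_gen:
  assumes "\<forall>js. length js < length is \<longrightarrow> good S (ipd js f) \<and> good S (ipd js g)"
    and "x \<in> interior S"
  shows "ipd is (\<lambda>y. f y + g y) x = ipd is f x + ipd is g x"
  using assms
proof (induction "is" arbitrary: x)
  case Nil then show ?case by simp
next
  case (Cons i "is")
  have IH: "\<And>y. y \<in> interior S \<Longrightarrow> ipd is (\<lambda>y. f y + g y) y = ipd is f y + ipd is g y"
    using Cons.IH Cons.prems(1) by force
  have "pd i (ipd is (\<lambda>y. f y + g y)) x = pd i (\<lambda>y. ipd is f y + ipd is g y) x"
    by (rule pd_local[OF open_interior Cons.prems(2)]) (rule IH)
  also have "\<dots> = pd i (ipd is f) x + pd i (ipd is g) x"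
    using Cons.prems unfolding good_def by (intro pd_add) auto
  finally show ?case by simp
qed

lemma ipd_diff_gen:
  assumes "\<forall>js. length js < length is \<longrightarrow> good S (ipd js f) \<and> good S (ipd js g)"
    and "x \<in> interior S"
  shows "ipd is (\<lambda>y. f y - g y) x = ipd is f x - ipd is g x"
  using assms
proof (induction "is" arbitrary: x)
  case Nil then show ?case by simp
next
  case (Cons i "is")
  have IH: "\<And>y. y \<in> interior S \<Longrightarrow> ipd is (\<lambda>y. f y - g y) y = ipd is f y - ipd is g y"
    using Cons.IH Cons.prems(1) by force
  have "pd i (ipd is (\<lambda>y. f y - g y)) x = pd i (\<lambda>y. ipd is f y - ipd is g y) x"
    by (rule pd_local[OF open_interior Cons.prems(2)]) (rule IH)
  also have "\<dots> = pd i (ipd is f) x - pd i (ipd is g) x"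
    using Cons.prems unfolding good_def by (intro pd_diff) auto
  finally show ?case by simp
qed

lemma ipd_add: "CS S f \<Longrightarrow> CS S g \<Longrightarrow> x \<in> interior S \<Longrightarrow>
    ipd is (\<lambda>y. f y + g y) x = ipd is f x + ipd is g x"
  by (rule ipd_add_gen) (auto simp: CS_def)

lemma ipd_diff: "CS S f \<Longrightarrow> CS S g \<Longrightarrow> x \<in> interior S \<Longrightarrow>
    ipd is (\<lambda>y. f y - g y) x = ipd is f x - ipd is g x"
  by (rule ipd_diff_gen) (auto simp: CS_def)

lemma CS_add: "CS S f \<Longrightarrow> CS S g \<Longrightarrow> CS S (\<lambda>y. f y + g y)"
proof -
  assume f: "CS S f" and g: "CS S g"
  show ?thesis unfolding CS_def
  proof
    fix "is"
    have "good S (\<lambda>y. ipd is f y + ipd is g y)"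
      using f g unfolding CS_def by (intro good_add) auto
    moreover have "\<And>y. y \<in> interior S \<Longrightarrow> ipd is f y + ipd is g y = ipd is (\<lambda>y. f y + g y) y"
      using ipd_add[OF f g] by simp
    ultimately show "good S (ipd is (\<lambda>y. f y + g y))" by (rule good_local[rotated])
  qed
qed

lemma CS_diff: "CS S f \<Longrightarrow> CS S g \<Longrightarrow> CS S (\<lambda>y. f y - g y)"
proof -
  assume f: "CS S f" and g: "CS S g"
  show ?thesis unfolding CS_def
  proof
    fix "is"
    have "good S (\<lambda>y. ipd is f y - ipd is g y)"
      using f g unfolding CS_def by (intro good_diff) auto
    moreover have "\<And>y. y \<in> interior S \<Longrightarrow> ipd is f y - ipd is g y = ipd is (\<lambda>y. f y - g y) y"
      using ipd_diff[OF f g] by simp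
    ultimately show "good S (ipd is (\<lambda>y. f y - g y))" by (rule good_local[rotated])
  qed
qed

lemma ipd_snoc: "ipd (is @ [i]) f = ipd is (pd i f)"
  by (simp add: ipd_append)

lemma ipd_mult_step:
  assumes "good S f" "good S g" "x \<in> interior S"
    and "\<forall>js. length js < length ks \<longrightarrow> good S (ipd js (\<lambda>y. pd i f y * g y)) \<and> good S (ipd js (\<lambda>y. f y * pd i g y))"
  shows "ipd (ks @ [i]) (\<lambda>y. f y * g y) x = ipd ks (\<lambda>y. pd i f y * g y) x + ipd ks (\<lambda>y. f y * pd i g y) x"
proof -
  have "ipd (ks @ [i]) (\<lambda>y. f y * g y) x = ipd ks (\<lambda>y. pd i f y * g y + f y * pd i g y) x"
    unfolding ipd_snoc
  proof (rule ipd_local[OF open_interior _ assms(3)])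
    fix y assume "y \<in> interior S"
    then have "lined f y i" "lined g y i" using assms(1,2) unfolding good_def by auto
    then show "pd i (\<lambda>y. f y * g y) y = pd i f y * g y + f y * pd i g y" by (rule pd_mult(2))
  qed
  also have "\<dots> = ipd ks (\<lambda>y. pd i f y * g y) x + ipd ks (\<lambda>y. f y * pd i g y) x"
    by (rule ipd_add_gen[OF assms(4,3)])
  finally show ?thesis .
qed

lemma rev_cases_list: "xs = [] \<or> (\<exists>ys y. xs = ys @ [y])"
  by (cases xs rule: rev_cases) auto

lemma CS_mult_aux:
  fixes S :: "(real^'n::finite) set"
  shows "\<forall>f g. CS S f \<longrightarrow> CS S g \<longrightarrow> (\<forall>is::'n list. length is \<le> n \<longrightarrow> good S (ipd is (\<lambda>y. f y * g y)))"
proof (induction n)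
  case 0 then show ?case by (auto simp: good_mult CS_good)
next
  case (Suc n)
  show ?case
  proof (intro allI impI)
    fix f g and "is" :: "'n list" assume f: "CS S f" and g: "CS S g" and len: "length is \<le> Suc n"
    show "good S (ipd is (\<lambda>y. f y * g y))"
    proof (cases "is" rule: rev_cases)
      case Nil then show ?thesis using f g by (simp add: good_mult CS_good)
    next
      case (snoc js i)
      have l: "length js \<le> n" using len snoc by simp
      have h1: "\<forall>ks. length ks \<le> n \<longrightarrow> good S (ipd ks (\<lambda>y. pd i f y * g y))"
        using Suc.IH CS_pd[OF f] g by blast
      have h2: "\<forall>ks. length ks \<le> n \<longrightarrow> good S (ipd ks (\<lambda>y. f y * pd i g y))"
        using Suc.IH CS_pd[OF g] f by blast
      have "\<And>x. x \<in> interior S \<Longrightarrow> ipd js (\<lambda>y. pd i f y * g y) x + ipd js (\<lambda>y. f y * pd i g y) x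
           = ipd (js @ [i]) (\<lambda>y. f y * g y) x"
      proof (rule ipd_mult_step[symmetric])
        show "good S f" "good S g" using f g by (auto intro: CS_good)
        show "\<forall>ks. length ks < length js \<longrightarrow> good S (ipd ks (\<lambda>y. pd i f y * g y)) \<and> good S (ipd ks (\<lambda>y. f y * pd i g y))"
          using h1 h2 l by simp
      qed
      moreover have "good S (\<lambda>x. ipd js (\<lambda>y. pd i f y * g y) x + ipd js (\<lambda>y. f y * pd i g y) x)"
        using h1 h2 l by (intro good_add) auto
      ultimately have "good S (ipd (js @ [i]) (\<lambda>y. f y * g y))" by (rule good_local)
      then show ?thesis using snoc by simp
    qed
  qed
qed

lemma CS_mult: "CS S f \<Longrightarrow> CS S g \<Longrightarrow> CS S (\<lambda>y. f y * g y)"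
  using CS_mult_aux unfolding CS_def by blast


lemma lined_DERIV: "lined f x i \<Longrightarrow> ((\<lambda>t. f (x + t *\<^sub>R axis i 1)) has_real_derivative pd i f x) (at 0)"
  using lined_hvd has_real_derivative_iff_has_vector_derivative by blast

lemma pd_eqI_DERIV: "((\<lambda>t. f (x + t *\<^sub>R axis i 1)) has_real_derivative D) (at 0) \<Longrightarrow> pd i f x = D"
  using pd_eqI has_real_derivative_iff_has_vector_derivative by blast

lemma linedI_DERIV: "((\<lambda>t. f (x + t *\<^sub>R axis i 1)) has_real_derivative D) (at 0) \<Longrightarrow> lined f x i"
  using linedI has_real_derivative_iff_has_vector_derivative by blast

lemma pd_cmult:
  assumes "lined f x i"
  shows "lined (\<lambda>y. c * f y) x i" "pd i (\<lambda>y. c * f y) x = c * pd i f x"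
  using pd_mult[OF pd_const(1) assms, of c] by (simp_all add: pd_const)

lemma ipd_cmult: "CS S f \<Longrightarrow> x \<in> interior S \<Longrightarrow> ipd is (\<lambda>y. c * f y) x = c * ipd is f x"
proof (induction "is" arbitrary: x)
  case Nil then show ?case by simp
next
  case (Cons i "is")
  have "pd i (ipd is (\<lambda>y. c * f y)) x = pd i (\<lambda>y. c * ipd is f y) x"
    by (rule pd_local[OF open_interior Cons.prems(2)]) (rule Cons.IH[OF Cons.prems(1)])
  also have "\<dots> = c * pd i (ipd is f) x"
    by (rule pd_cmult(2)) (use goodD(1)[OF CS_good[OF CS_ipd[OF Cons.prems(1)]] Cons.prems(2)] in auto)
  finally show ?case by simp
qed

lemma CS_cmult: "CS S f \<Longrightarrow> CS S (\<lambda>y. c * f y)"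
  by (rule CS_mult[OF CS_const])

lemma CS_sum: "finite A \<Longrightarrow> (\<And>a. a \<in> A \<Longrightarrow> CS S (f a)) \<Longrightarrow> CS S (\<lambda>y. \<Sum>a\<in>A. f a y)"
proof (induction A rule: finite_induct)
  case empty then show ?case by (simp add: CS_const)
next
  case (insert a A)
  have "CS S (\<lambda>y. f a y + (\<Sum>a\<in>A. f a y))"
    by (rule CS_add) (use insert in auto)
  then show ?case using insert by simp
qed

lemma CS_prod: "finite A \<Longrightarrow> (\<And>a. a \<in> A \<Longrightarrow> CS S (f a)) \<Longrightarrow> CS S (\<lambda>y. \<Prod>a\<in>A. f a y)"
proof (induction A rule: finite_induct)
  case empty then show ?case by (simp add: CS_const)
next
  case (insert a A)
  have "CS S (\<lambda>y. f a y * (\<Prod>a\<in>A. f a y))"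
    by (rule CS_mult) (use insert in auto)
  then show ?case using insert by simp
qed

lemma ipd_sum: "finite A \<Longrightarrow> (\<And>a. a \<in> A \<Longrightarrow> CS S (f a)) \<Longrightarrow> x \<in> interior S \<Longrightarrow>
   ipd is (\<lambda>y. \<Sum>a\<in>A. f a y) x = (\<Sum>a\<in>A. ipd is (f a) x)"
proof (induction A rule: finite_induct)
  case empty then show ?case by (simp add: ipd_const)
next
  case (insert a A)
  have "ipd is (\<lambda>y. \<Sum>a\<in>insert a A. f a y) x = ipd is (\<lambda>y. f a y + (\<Sum>a\<in>A. f a y)) x"
    using insert by simp
  also have "\<dots> = ipd is (f a) x + ipd is (\<lambda>y. \<Sum>a\<in>A. f a y) x"
    by (rule ipd_add[OF _ CS_sum[OF insert(1)]]) (use insert in auto)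
  also have "\<dots> = (\<Sum>a\<in>insert a A. ipd is (f a) x)" using insert by simp
  finally show ?case .
qed

lemma pd_quot:
  assumes "lined h x i" "lined g x i" "g x \<noteq> 0"
  shows "lined (\<lambda>y. h y / g y ^ k) x i"
    "pd i (\<lambda>y. h y / g y ^ k) x = pd i h x / g x ^ k - real k * h x * pd i g x / g x ^ Suc k"
proof -
  have dh: "((\<lambda>t. h (x + t *\<^sub>R axis i 1)) has_real_derivative pd i h x) (at 0)" by (rule lined_DERIV[OF assms(1)])
  have dg: "((\<lambda>t. g (x + t *\<^sub>R axis i 1)) has_real_derivative pd i g x) (at 0)" by (rule lined_DERIV[OF assms(2)])
  have dgk: "((\<lambda>t. g (x + t *\<^sub>R axis i 1) ^ k) has_real_derivative real k * g x ^ (k - 1) * pd i g x) (at 0)"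
    using DERIV_power[OF dg, of k] by (simp add: mult_ac)
  have *: "((\<lambda>t. h (x + t *\<^sub>R axis i 1) / g (x + t *\<^sub>R axis i 1) ^ k) has_real_derivative
     (pd i h x * g x ^ k - h x * (real k * g x ^ (k - 1) * pd i g x)) / (g x ^ k * g x ^ k)) (at 0)"
    using DERIV_divide[OF dh dgk] assms(3) by simp
  have e: "(pd i h x * g x ^ k - h x * (real k * g x ^ (k - 1) * pd i g x)) / (g x ^ k * g x ^ k)
      = pd i h x / g x ^ k - real k * h x * pd i g x / g x ^ Suc k"
  proof (cases k)
    case 0 then show ?thesis by simp
  next
    case (Suc j)
    then show ?thesis using assms(3) by (simp add: field_simps power_add[symmetric])
  qed
  show "lined (\<lambda>y. h y / g y ^ k) x i" using linedI_DERIV[OF *] .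
  show "pd i (\<lambda>y. h y / g y ^ k) x = pd i h x / g x ^ k - real k * h x * pd i g x / g x ^ Suc k"
    using pd_eqI_DERIV[OF *] e by simp
qed

definition nzb :: "(real^'n) set \<Rightarrow> (real^'n \<Rightarrow> real) \<Rightarrow> bool" where
  "nzb S g \<longleftrightarrow> (\<forall>x\<in>interior S. g x \<noteq> 0) \<and> (\<forall>x\<in>S. \<exists>L. (g \<longlongrightarrow> L) (at x within interior S) \<and> L \<noteq> 0)"

lemma good_quot:
  assumes "good S h" "good S g" "nzb S g"
  shows "good S (\<lambda>y. h y / g y ^ k)"
proof (rule goodI)
  have nz: "\<And>x. x \<in> interior S \<Longrightarrow> g x \<noteq> 0" using assms(3) unfolding nzb_def by blast
  show "lined (\<lambda>y. h y / g y ^ k) x i" if "x \<in> interior S" for x i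
    by (rule pd_quot(1)) (use goodD(1)[OF assms(1) that] goodD(1)[OF assms(2) that] nz[OF that] in auto)
  show "continuous_on (interior S) (\<lambda>y. h y / g y ^ k)"
    using goodD(2)[OF assms(1)] goodD(2)[OF assms(2)] nz by (intro continuous_intros) auto
  show "\<exists>L. ((\<lambda>y. h y / g y ^ k) \<longlongrightarrow> L) (at x within interior S)" if xS: "x \<in> S" for x
  proof -
    obtain L1 where "(h \<longlongrightarrow> L1) (at x within interior S)" using goodD(3)[OF assms(1) xS] by blast
    moreover obtain L2 where "(g \<longlongrightarrow> L2) (at x within interior S)" "L2 \<noteq> 0"
      using assms(3) xS unfolding nzb_def by blast
    ultimately have "((\<lambda>y. h y / g y ^ k) \<longlongrightarrow> L1 / L2 ^ k) (at x within interior S)"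
      by (intro tendsto_divide tendsto_power) auto
    then show ?thesis by blast
  qed
qed

lemma ipd_quot_step:
  assumes "good S h" "good S g" "nzb S g" "x \<in> interior S"
    and "\<forall>js. length js < length ks \<longrightarrow> good S (ipd js (\<lambda>y. pd i h y / g y ^ k))
          \<and> good S (ipd js (\<lambda>y. (real k * h y * pd i g y) / g y ^ Suc k))"
  shows "ipd (ks @ [i]) (\<lambda>y. h y / g y ^ k) x = ipd ks (\<lambda>y. pd i h y / g y ^ k) x
          - ipd ks (\<lambda>y. (real k * h y * pd i g y) / g y ^ Suc k) x"
proof -
  have "ipd (ks @ [i]) (\<lambda>y. h y / g y ^ k) x = ipd ks (\<lambda>y. pd i h y / g y ^ k - (real k * h y * pd i g y) / g y ^ Suc k) x"
    unfolding ipd_snoc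
  proof (rule ipd_local[OF open_interior _ assms(4)])
    fix y assume y: "y \<in> interior S"
    then have "lined h y i" "lined g y i" "g y \<noteq> 0" using assms(1,2,3) unfolding good_def nzb_def by auto
    then show "pd i (\<lambda>y. h y / g y ^ k) y = pd i h y / g y ^ k - (real k * h y * pd i g y) / g y ^ Suc k"
      by (rule pd_quot(2))
  qed
  also have "\<dots> = ipd ks (\<lambda>y. pd i h y / g y ^ k) x - ipd ks (\<lambda>y. (real k * h y * pd i g y) / g y ^ Suc k) x"
    by (rule ipd_diff_gen[OF assms(5,4)])
  finally show ?thesis .
qed

lemma CS_quot_aux:
  fixes S :: "(real^'n::finite) set"
  assumes g: "CS S g" "nzb S g"
  shows "\<forall>h k. CS S h \<longrightarrow> (\<forall>is::'n list. length is \<le> n \<longrightarrow> good S (ipd is (\<lambda>y. h y / g y ^ k)))"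
proof (induction n)
  case 0 show ?case
  proof (intro allI impI)
    fix h k and "is" :: "'n list" assume "CS S h" "length is \<le> 0"
    then show "good S (ipd is (\<lambda>y. h y / g y ^ k))"
      using good_quot[OF CS_good CS_good[OF g(1)] g(2)] by simp
  qed
next
  case (Suc n)
  show ?case
  proof (intro allI impI)
    fix h k and "is" :: "'n list" assume h: "CS S h" and len: "length is \<le> Suc n"
    show "good S (ipd is (\<lambda>y. h y / g y ^ k))"
    proof (cases "is" rule: rev_cases)
      case Nil then show ?thesis using h g by (simp add: good_quot CS_good)
    next
      case (snoc js i)
      have l: "length js \<le> n" using len snoc by simp
      have h1: "\<forall>ks. length ks \<le> n \<longrightarrow> good S (ipd ks (\<lambda>y. pd i h y / g y ^ k))"
        using Suc.IH CS_pd[OF h] by blast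
      have c2: "CS S (\<lambda>y. real k * h y * pd i g y)"
        by (intro CS_mult CS_const h CS_pd g(1))
      have h2: "\<forall>ks. length ks \<le> n \<longrightarrow> good S (ipd ks (\<lambda>y. (real k * h y * pd i g y) / g y ^ Suc k))"
        using Suc.IH c2 by blast
      have "\<And>x. x \<in> interior S \<Longrightarrow> ipd js (\<lambda>y. pd i h y / g y ^ k) x - ipd js (\<lambda>y. (real k * h y * pd i g y) / g y ^ Suc k) x
           = ipd (js @ [i]) (\<lambda>y. h y / g y ^ k) x"
      proof (rule ipd_quot_step[symmetric])
        show "good S h" "good S g" using h g by (auto intro: CS_good)
        show "nzb S g" by (rule g(2))
        show "\<forall>ks. length ks < length js \<longrightarrow> good S (ipd ks (\<lambda>y. pd i h y / g y ^ k))
          \<and> good S (ipd ks (\<lambda>y. (real k * h y * pd i g y) / g y ^ Suc k))"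
          using h1 h2 l by simp
      qed
      moreover have "good S (\<lambda>x. ipd js (\<lambda>y. pd i h y / g y ^ k) x - ipd js (\<lambda>y. (real k * h y * pd i g y) / g y ^ Suc k) x)"
        using h1 h2 l by (intro good_diff) auto
      ultimately have "good S (ipd (js @ [i]) (\<lambda>y. h y / g y ^ k))" by (rule good_local)
      then show ?thesis using snoc by simp
    qed
  qed
qed

lemma CS_quot:
  assumes "CS S h" "CS S g" "nzb S g" shows "CS S (\<lambda>y. h y / g y ^ k)"
  unfolding CS_def
proof
  fix "is"
  show "good S (ipd is (\<lambda>y. h y / g y ^ k))"
    using CS_quot_aux[OF assms(2,3), of "length is"] assms(1) by blast
qed

lemma CS_div: "CS S h \<Longrightarrow> CS S g \<Longrightarrow> nzb S g \<Longrightarrow> CS S (\<lambda>y. h y / g y)"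
  using CS_quot[of S h g 1] by simp

lemma nzb_smooth: "smooth_upto S g \<Longrightarrow> (\<forall>x\<in>S. g x \<noteq> 0) \<Longrightarrow> nzb S g"
  unfolding nzb_def smooth_upto_alt using interior_subset by blast


section \<open>Jets\<close>

lemma jc_tendsto:
  assumes "S \<subseteq> closure (interior S)" "x \<in> S" "good S (ipd is f)"
  shows "(ipd is f \<longlongrightarrow> jc S is f x) (at x within interior S)"
proof -
  obtain L where L: "(ipd is f \<longlongrightarrow> L) (at x within interior S)" using goodD(3)[OF assms(3,2)] by blast
  have nb: "at x within interior S \<noteq> bot" using assms(1,2) by (intro notbot_within_open) auto
  have "jc S is f x = L" unfolding jc_def using tendsto_Lim[OF _ L] nb by simp
  then show ?thesis using L by simp
qed

lemma jc_eqI: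
  assumes "S \<subseteq> closure (interior S)" "x \<in> S" "(ipd is f \<longlongrightarrow> L) (at x within interior S)"
  shows "jc S is f x = L"
proof -
  have nb: "at x within interior S \<noteq> bot" using assms(1,2) by (intro notbot_within_open) auto
  show ?thesis unfolding jc_def using tendsto_Lim[OF _ assms(3)] nb by simp
qed

lemma jc_local:
  assumes "\<And>y. y \<in> interior S \<Longrightarrow> ipd is f y = ipd is g y"
  shows "jc S is f x = jc S is g x"
proof -
  have "eventually (\<lambda>y. ipd is f y = ipd is g y) (at x within interior S)"
    unfolding eventually_at_filter by (rule always_eventually) (use assms in auto)
  then show ?thesis unfolding jc_def by (rule Lim_cong) simp
qed

lemma jc_local_fun:
  assumes "\<And>y. y \<in> interior S \<Longrightarrow> f y = g y"
  shows "jc S is f x = jc S is g x"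
  by (rule jc_local, rule ipd_local[OF open_interior]) (use assms in auto)

lemma jc_snoc: "jc S (is @ [i]) f = jc S is (pd i f)"
  unfolding jc_def ipd_snoc ..

lemma jc_append: "jc S (is @ js) f = jc S is (ipd js f)"
  unfolding jc_def ipd_append ..

lemma jc_nil:
  assumes "S \<subseteq> closure (interior S)" "x \<in> S" "(f \<longlongrightarrow> f x) (at x within interior S)"
  shows "jc S [] f x = f x"
  using jc_eqI[OF assms(1,2)] assms(3) by simp

lemma jc_smooth_nil: "smooth_upto S f \<Longrightarrow> x \<in> S \<Longrightarrow> jc S [] f x = f x"
  unfolding smooth_upto_alt by (intro jc_nil) auto

lemma jc_add:
  assumes "S \<subseteq> closure (interior S)" "x \<in> S" "CS S f" "CS S g"
  shows "jc S is (\<lambda>y. f y + g y) x = jc S is f x + jc S is g x"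
proof -
  have "jc S is (\<lambda>y. f y + g y) x = jc S is (\<lambda>y. f y + g y) x" ..
  have "jc S is (\<lambda>y. f y + g y) x = Lim (at x within interior S) (\<lambda>y. ipd is f y + ipd is g y)"
    unfolding jc_def
    by (rule Lim_cong) (auto simp: eventually_at_filter ipd_add[OF assms(3,4)] intro!: always_eventually)
  also have "\<dots> = jc S is f x + jc S is g x"
    unfolding jc_def[of S "is" f] jc_def[of S "is" g]
    using jc_tendsto[OF assms(1,2) CS_good[OF CS_ipd[OF assms(3)]]] jc_tendsto[OF assms(1,2) CS_good[OF CS_ipd[OF assms(4)]]]
      notbot_within_open[of "interior S" x] assms(1,2)
    by (intro tendsto_Lim tendsto_add) (auto simp: jc_def)
  finally show ?thesis .
qed

lemma jc_diff:
  assumes "S \<subseteq> closure (interior S)" "x \<in> S" "CS S f" "CS S g"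
  shows "jc S is (\<lambda>y. f y - g y) x = jc S is f x - jc S is g x"
proof -
  have "jc S is (\<lambda>y. f y - g y) x = Lim (at x within interior S) (\<lambda>y. ipd is f y - ipd is g y)"
    unfolding jc_def
    by (rule Lim_cong) (auto simp: eventually_at_filter ipd_diff[OF assms(3,4)] intro!: always_eventually)
  also have "\<dots> = jc S is f x - jc S is g x"
    using jc_tendsto[OF assms(1,2) CS_good[OF CS_ipd[OF assms(3)]]] jc_tendsto[OF assms(1,2) CS_good[OF CS_ipd[OF assms(4)]]]
      notbot_within_open[of "interior S" x] assms(1,2)
    by (intro tendsto_Lim tendsto_diff) (auto simp: jc_def)
  finally show ?thesis .
qed

lemma jc_mult_nil:
  assumes "S \<subseteq> closure (interior S)" "x \<in> S" "CS S f" "CS S g"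
  shows "jc S [] (\<lambda>y. f y * g y) x = jc S [] f x * jc S [] g x"
proof -
  have t1: "(f \<longlongrightarrow> jc S [] f x) (at x within interior S)"
    using jc_tendsto[OF assms(1,2), of "[]" f] CS_good[OF assms(3)] by simp
  have t2: "(g \<longlongrightarrow> jc S [] g x) (at x within interior S)"
    using jc_tendsto[OF assms(1,2), of "[]" g] CS_good[OF assms(4)] by simp
  show ?thesis by (rule jc_eqI[OF assms(1,2)]) (simp add: tendsto_mult[OF t1 t2])
qed

lemma jc_quot_nil:
  assumes "S \<subseteq> closure (interior S)" "x \<in> S" "CS S h" "CS S g" "nzb S g"
  shows "jc S [] (\<lambda>y. h y / g y ^ k) x = jc S [] h x / jc S [] g x ^ k"
proof -
  obtain L where L: "(g \<longlongrightarrow> L) (at x within interior S)" "L \<noteq> 0"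
    using assms(5,2) unfolding nzb_def by blast
  have "jc S [] g x = L" using jc_eqI[OF assms(1,2), of "[]" g] L by simp
  moreover have t1: "(h \<longlongrightarrow> jc S [] h x) (at x within interior S)"
    using jc_tendsto[OF assms(1,2), of "[]" h] CS_good[OF assms(3)] by simp
  ultimately show ?thesis
    using L by (intro jc_eqI[OF assms(1,2)]) (auto intro!: tendsto_divide tendsto_power)
qed

lemma jc_mult_snoc:
  assumes "S \<subseteq> closure (interior S)" "x \<in> S" "CS S u" "CS S v"
  shows "jc S (js @ [i]) (\<lambda>y. u y * v y) x = jc S js (\<lambda>y. pd i u y * v y) x + jc S js (\<lambda>y. u y * pd i v y) x"
proof -
  have "jc S (js @ [i]) (\<lambda>y. u y * v y) x = jc S js (\<lambda>y. pd i u y * v y + u y * pd i v y) x"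
    unfolding jc_snoc
  proof (rule jc_local_fun)
    fix y assume y: "y \<in> interior S"
    have "lined u y i" "lined v y i" using goodD(1)[OF CS_good[OF assms(3)] y] goodD(1)[OF CS_good[OF assms(4)] y] by auto
    then show "pd i (\<lambda>y. u y * v y) y = pd i u y * v y + u y * pd i v y" by (rule pd_mult(2))
  qed
  also have "\<dots> = jc S js (\<lambda>y. pd i u y * v y) x + jc S js (\<lambda>y. u y * pd i v y) x"
    by (rule jc_add[OF assms(1,2)]) (intro CS_mult CS_pd assms(3,4))+
  finally show ?thesis .
qed

lemma jc_quot_snoc:
  assumes "S \<subseteq> closure (interior S)" "x \<in> S" "CS S h" "CS S g" "nzb S g"
  shows "jc S (js @ [i]) (\<lambda>y. h y / g y ^ k) x = jc S js (\<lambda>y. pd i h y / g y ^ k) x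
          - jc S js (\<lambda>y. (real k * h y * pd i g y) / g y ^ Suc k) x"
proof -
  have "jc S (js @ [i]) (\<lambda>y. h y / g y ^ k) x = jc S js (\<lambda>y. pd i h y / g y ^ k - (real k * h y * pd i g y) / g y ^ Suc k) x"
    unfolding jc_snoc
  proof (rule jc_local_fun)
    fix y assume y: "y \<in> interior S"
    have "lined h y i" "lined g y i" using goodD(1)[OF CS_good[OF assms(3)] y] goodD(1)[OF CS_good[OF assms(4)] y] by auto
    moreover have "g y \<noteq> 0" using assms(5) y unfolding nzb_def by blast
    ultimately show "pd i (\<lambda>y. h y / g y ^ k) y = pd i h y / g y ^ k - (real k * h y * pd i g y) / g y ^ Suc k"
      by (rule pd_quot(2))
  qed
  also have "\<dots> = jc S js (\<lambda>y. pd i h y / g y ^ k) x - jc S js (\<lambda>y. (real k * h y * pd i g y) / g y ^ Suc k) x"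
    by (rule jc_diff[OF assms(1,2)]) (intro CS_quot CS_mult CS_pd CS_const assms(3,4,5))+
  finally show ?thesis .
qed

section \<open>Agreement of jets\<close>

definition agr :: "'n \<Rightarrow> (real^'n) set \<Rightarrow> (real^'n) set \<Rightarrow> nat \<Rightarrow> (real^'n \<Rightarrow> real) \<Rightarrow> (real^'n \<Rightarrow> real) \<Rightarrow> bool" where
  "agr N S B m u v \<longleftrightarrow> (\<forall>is. \<forall>x\<in>B. count_list is N \<le> m \<longrightarrow> jc S is u x = jc S is v x)"

lemma agrD: "agr N S B m u v \<Longrightarrow> x \<in> B \<Longrightarrow> count_list is N \<le> m \<Longrightarrow> jc S is u x = jc S is v x"
  unfolding agr_def by blast

lemma agr_mono: "agr N S B m u v \<Longrightarrow> m' \<le> m \<Longrightarrow> agr N S B m' u v"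
  unfolding agr_def by force

lemma agr_refl: "agr N S B m u u"
  unfolding agr_def by simp

lemma agr_pd_gen:
  assumes "agr N S B m u v" "m' + (if i = N then 1 else 0) \<le> m"
  shows "agr N S B m' (pd i u) (pd i v)"
  unfolding agr_def
proof (intro allI ballI impI)
  fix "is" x assume x: "x \<in> B" and c: "count_list is N \<le> m'"
  have "count_list (is @ [i]) N \<le> m" using c assms(2) by (auto split: if_splits)
  then have "jc S (is @ [i]) u x = jc S (is @ [i]) v x" by (rule agrD[OF assms(1) x])
  then show "jc S is (pd i u) x = jc S is (pd i v) x" by (simp add: jc_snoc)
qed

lemma agr_add:
  assumes "S \<subseteq> closure (interior S)" "B \<subseteq> S" "CS S u1" "CS S u2" "CS S v1" "CS S v2"
    "agr N S B m u1 u2" "agr N S B m v1 v2"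
  shows "agr N S B m (\<lambda>y. u1 y + v1 y) (\<lambda>y. u2 y + v2 y)"
  unfolding agr_def
proof (intro allI ballI impI)
  fix "is" x assume x: "x \<in> B" and c: "count_list is N \<le> m"
  have xS: "x \<in> S" using x assms(2) by auto
  show "jc S is (\<lambda>y. u1 y + v1 y) x = jc S is (\<lambda>y. u2 y + v2 y) x"
    using jc_add[OF assms(1) xS assms(3,5)] jc_add[OF assms(1) xS assms(4,6)]
      agrD[OF assms(7) x c] agrD[OF assms(8) x c] by simp
qed

lemma agr_diff:
  assumes "S \<subseteq> closure (interior S)" "B \<subseteq> S" "CS S u1" "CS S u2" "CS S v1" "CS S v2"
    "agr N S B m u1 u2" "agr N S B m v1 v2"
  shows "agr N S B m (\<lambda>y. u1 y - v1 y) (\<lambda>y. u2 y - v2 y)"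
  unfolding agr_def
proof (intro allI ballI impI)
  fix "is" x assume x: "x \<in> B" and c: "count_list is N \<le> m"
  have xS: "x \<in> S" using x assms(2) by auto
  show "jc S is (\<lambda>y. u1 y - v1 y) x = jc S is (\<lambda>y. u2 y - v2 y) x"
    using jc_diff[OF assms(1) xS assms(3,5)] jc_diff[OF assms(1) xS assms(4,6)]
      agrD[OF assms(7) x c] agrD[OF assms(8) x c] by simp
qed

lemma agr_mult_aux:
  fixes S B :: "(real^'n::finite) set"
  assumes "S \<subseteq> closure (interior S)" "B \<subseteq> S"
  shows "\<forall>m u1 u2 v1 v2 (is::'n list) x. CS S u1 \<longrightarrow> CS S u2 \<longrightarrow> CS S v1 \<longrightarrow> CS S v2 \<longrightarrow>
     agr N S B m u1 u2 \<longrightarrow> agr N S B m v1 v2 \<longrightarrow> length is \<le> n \<longrightarrow> x \<in> B \<longrightarrow> count_list is N \<le> m \<longrightarrow>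
     jc S is (\<lambda>y. u1 y * v1 y) x = jc S is (\<lambda>y. u2 y * v2 y) x"
proof (induction n)
  case 0
  show ?case
  proof (intro allI impI)
    fix m u1 u2 v1 v2 and "is" :: "'n list" and x
    assume h: "CS S u1" "CS S u2" "CS S v1" "CS S v2" "agr N S B m u1 u2" "agr N S B m v1 v2"
      "length is \<le> 0" "x \<in> B" "count_list is N \<le> m"
    have xS: "x \<in> S" using h(8) assms(2) by auto
    have "is = []" using h(7) by simp
    then show "jc S is (\<lambda>y. u1 y * v1 y) x = jc S is (\<lambda>y. u2 y * v2 y) x"
      using jc_mult_nil[OF assms(1) xS h(1,3)] jc_mult_nil[OF assms(1) xS h(2,4)]
        agrD[OF h(5) h(8), of "[]"] agrD[OF h(6) h(8), of "[]"] by simp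
  qed
next
  case (Suc n)
  show ?case
  proof (intro allI impI)
    fix m u1 u2 v1 v2 and "is" :: "'n list" and x
    assume h: "CS S u1" "CS S u2" "CS S v1" "CS S v2" "agr N S B m u1 u2" "agr N S B m v1 v2"
      "length is \<le> Suc n" "x \<in> B" "count_list is N \<le> m"
    have xS: "x \<in> S" using h(8) assms(2) by auto
    show "jc S is (\<lambda>y. u1 y * v1 y) x = jc S is (\<lambda>y. u2 y * v2 y) x"
    proof (cases "is" rule: rev_cases)
      case Nil
      then show ?thesis
        using jc_mult_nil[OF assms(1) xS h(1,3)] jc_mult_nil[OF assms(1) xS h(2,4)]
          agrD[OF h(5) h(8), of "[]"] agrD[OF h(6) h(8), of "[]"] by simp
    next
      case (snoc js i)
      define m' where "m' = (if i = N then m - 1 else m)"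
      have cjs: "count_list js N \<le> m'" and mm: "m' + (if i = N then 1 else 0) \<le> m"
        using h(9) snoc unfolding m'_def by (auto split: if_splits)
      have lj: "length js \<le> n" using h(7) snoc by simp
      have a1: "agr N S B m' (pd i u1) (pd i u2)" by (rule agr_pd_gen[OF h(5) mm])
      have a2: "agr N S B m' (pd i v1) (pd i v2)" by (rule agr_pd_gen[OF h(6) mm])
      have a3: "agr N S B m' u1 u2" by (rule agr_mono[OF h(5)]) (use mm in auto)
      have a4: "agr N S B m' v1 v2" by (rule agr_mono[OF h(6)]) (use mm in auto)
      have e1: "jc S js (\<lambda>y. pd i u1 y * v1 y) x = jc S js (\<lambda>y. pd i u2 y * v2 y) x"
        using Suc.IH CS_pd h(1-4) a1 a4 lj h(8) cjs by blast
      have e2: "jc S js (\<lambda>y. u1 y * pd i v1 y) x = jc S js (\<lambda>y. u2 y * pd i v2 y) x"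
        using Suc.IH CS_pd h(1-4) a3 a2 lj h(8) cjs by blast
      show ?thesis unfolding snoc
        using jc_mult_snoc[OF assms(1) xS h(1,3)] jc_mult_snoc[OF assms(1) xS h(2,4)] e1 e2 by simp
    qed
  qed
qed

lemma agr_mult:
  assumes "S \<subseteq> closure (interior S)" "B \<subseteq> S" "CS S u1" "CS S u2" "CS S v1" "CS S v2"
    "agr N S B m u1 u2" "agr N S B m v1 v2"
  shows "agr N S B m (\<lambda>y. u1 y * v1 y) (\<lambda>y. u2 y * v2 y)"
  unfolding agr_def
proof (intro allI ballI impI)
  fix "is" x assume "x \<in> B" "count_list is N \<le> m"
  then show "jc S is (\<lambda>y. u1 y * v1 y) x = jc S is (\<lambda>y. u2 y * v2 y) x"
    using agr_mult_aux[OF assms(1,2), where n="length is" and N=N] assms(3-8) by blast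
qed

lemma agr_quot_aux:
  fixes S B :: "(real^'n::finite) set"
  assumes "S \<subseteq> closure (interior S)" "B \<subseteq> S"
  shows "\<forall>m h1 h2 g1 g2 k (is::'n list) x. CS S h1 \<longrightarrow> CS S h2 \<longrightarrow> CS S g1 \<longrightarrow> CS S g2 \<longrightarrow>
     nzb S g1 \<longrightarrow> nzb S g2 \<longrightarrow>
     agr N S B m h1 h2 \<longrightarrow> agr N S B m g1 g2 \<longrightarrow> length is \<le> n \<longrightarrow> x \<in> B \<longrightarrow> count_list is N \<le> m \<longrightarrow>
     jc S is (\<lambda>y. h1 y / g1 y ^ k) x = jc S is (\<lambda>y. h2 y / g2 y ^ k) x"
proof (induction n)
  case 0
  show ?case
  proof (intro allI impI)
    fix m h1 h2 g1 g2 k and "is" :: "'n list" and x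
    assume h: "CS S h1" "CS S h2" "CS S g1" "CS S g2" "nzb S g1" "nzb S g2" "agr N S B m h1 h2" "agr N S B m g1 g2"
      "length is \<le> 0" "x \<in> B" "count_list is N \<le> m"
    have xS: "x \<in> S" using h(10) assms(2) by auto
    have "is = []" using h(9) by simp
    then show "jc S is (\<lambda>y. h1 y / g1 y ^ k) x = jc S is (\<lambda>y. h2 y / g2 y ^ k) x"
      using jc_quot_nil[OF assms(1) xS h(1,3,5)] jc_quot_nil[OF assms(1) xS h(2,4,6)]
        agrD[OF h(7) h(10), of "[]"] agrD[OF h(8) h(10), of "[]"] by simp
  qed
next
  case (Suc n)
  show ?case
  proof (intro allI impI)
    fix m h1 h2 g1 g2 k and "is" :: "'n list" and x
    assume h: "CS S h1" "CS S h2" "CS S g1" "CS S g2" "nzb S g1" "nzb S g2" "agr N S B m h1 h2" "agr N S B m g1 g2"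
      "length is \<le> Suc n" "x \<in> B" "count_list is N \<le> m"
    have xS: "x \<in> S" using h(10) assms(2) by auto
    show "jc S is (\<lambda>y. h1 y / g1 y ^ k) x = jc S is (\<lambda>y. h2 y / g2 y ^ k) x"
    proof (cases "is" rule: rev_cases)
      case Nil
      then show ?thesis
        using jc_quot_nil[OF assms(1) xS h(1,3,5)] jc_quot_nil[OF assms(1) xS h(2,4,6)]
          agrD[OF h(7) h(10), of "[]"] agrD[OF h(8) h(10), of "[]"] by simp
    next
      case (snoc js i)
      define m' where "m' = (if i = N then m - 1 else m)"
      have cjs: "count_list js N \<le> m'" and mm: "m' + (if i = N then 1 else 0) \<le> m"
        using h(11) snoc unfolding m'_def by (auto split: if_splits)
      have lj: "length js \<le> n" using h(9) snoc by simp
      have a1: "agr N S B m' (pd i h1) (pd i h2)" by (rule agr_pd_gen[OF h(7) mm])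
      have a2: "agr N S B m' (pd i g1) (pd i g2)" by (rule agr_pd_gen[OF h(8) mm])
      have a3: "agr N S B m' h1 h2" by (rule agr_mono[OF h(7)]) (use mm in auto)
      have a4: "agr N S B m' g1 g2" by (rule agr_mono[OF h(8)]) (use mm in auto)
      have c1: "CS S (\<lambda>y. real k * h1 y * pd i g1 y)" by (intro CS_mult CS_const CS_pd h(1,3))
      have c2: "CS S (\<lambda>y. real k * h2 y * pd i g2 y)" by (intro CS_mult CS_const CS_pd h(2,4))
      have a5: "agr N S B m' (\<lambda>y. real k * h1 y * pd i g1 y) (\<lambda>y. real k * h2 y * pd i g2 y)"
        by (intro agr_mult[OF assms(1,2)] CS_mult CS_const CS_pd h(1-4) agr_refl a3 a2)
      have e1: "jc S js (\<lambda>y. pd i h1 y / g1 y ^ k) x = jc S js (\<lambda>y. pd i h2 y / g2 y ^ k) x"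
        using Suc.IH CS_pd h(1-6) a1 a4 lj h(10) cjs by blast
      have e2: "jc S js (\<lambda>y. (real k * h1 y * pd i g1 y) / g1 y ^ Suc k) x = jc S js (\<lambda>y. (real k * h2 y * pd i g2 y) / g2 y ^ Suc k) x"
        using Suc.IH c1 c2 h(3-6) a5 a4 lj h(10) cjs by blast
      show ?thesis unfolding snoc
        using jc_quot_snoc[OF assms(1) xS h(1,3,5)] jc_quot_snoc[OF assms(1) xS h(2,4,6)] e1 e2 by simp
    qed
  qed
qed

lemma agr_quot:
  assumes "S \<subseteq> closure (interior S)" "B \<subseteq> S" "CS S h1" "CS S h2" "CS S g1" "CS S g2" "nzb S g1" "nzb S g2"
    "agr N S B m h1 h2" "agr N S B m g1 g2"
  shows "agr N S B m (\<lambda>y. h1 y / g1 y ^ k) (\<lambda>y. h2 y / g2 y ^ k)"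
  unfolding agr_def
proof (intro allI ballI impI)
  fix "is" x assume "x \<in> B" "count_list is N \<le> m"
  then show "jc S is (\<lambda>y. h1 y / g1 y ^ k) x = jc S is (\<lambda>y. h2 y / g2 y ^ k) x"
    using agr_quot_aux[OF assms(1,2), where n="length is" and N=N] assms(3-10) by blast
qed

lemma agr_div:
  assumes "S \<subseteq> closure (interior S)" "B \<subseteq> S" "CS S h1" "CS S h2" "CS S g1" "CS S g2" "nzb S g1" "nzb S g2"
    "agr N S B m h1 h2" "agr N S B m g1 g2"
  shows "agr N S B m (\<lambda>y. h1 y / g1 y) (\<lambda>y. h2 y / g2 y)"
  using agr_quot[OF assms, of 1] by simp

lemma agr_sum:
  assumes "S \<subseteq> closure (interior S)" "B \<subseteq> S" "finite A"
    "\<And>a. a \<in> A \<Longrightarrow> CS S (f a)" "\<And>a. a \<in> A \<Longrightarrow> CS S (g a)" "\<And>a. a \<in> A \<Longrightarrow> agr N S B m (f a) (g a)"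
  shows "agr N S B m (\<lambda>y. \<Sum>a\<in>A. f a y) (\<lambda>y. \<Sum>a\<in>A. g a y)"
  using assms(3-6)
proof (induction A rule: finite_induct)
  case empty then show ?case by (simp add: agr_refl)
next
  case (insert a A)
  have "agr N S B m (\<lambda>y. f a y + (\<Sum>a\<in>A. f a y)) (\<lambda>y. g a y + (\<Sum>a\<in>A. g a y))"
    by (rule agr_add[OF assms(1,2)]) (use insert in \<open>auto intro!: CS_sum\<close>)
  then show ?case using insert by simp
qed

lemma agr_prod:
  assumes "S \<subseteq> closure (interior S)" "B \<subseteq> S" "finite A"
    "\<And>a. a \<in> A \<Longrightarrow> CS S (f a)" "\<And>a. a \<in> A \<Longrightarrow> CS S (g a)" "\<And>a. a \<in> A \<Longrightarrow> agr N S B m (f a) (g a)"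
  shows "agr N S B m (\<lambda>y. \<Prod>a\<in>A. f a y) (\<lambda>y. \<Prod>a\<in>A. g a y)"
  using assms(3-6)
proof (induction A rule: finite_induct)
  case empty then show ?case by (simp add: agr_refl)
next
  case (insert a A)
  have "agr N S B m (\<lambda>y. f a y * (\<Prod>a\<in>A. f a y)) (\<lambda>y. g a y * (\<Prod>a\<in>A. g a y))"
    by (rule agr_mult[OF assms(1,2)]) (use insert in \<open>auto intro!: CS_prod\<close>)
  then show ?case using insert by simp
qed


lemma line_DERIV_at:
  assumes "lined f (q + s0 *\<^sub>R axis i 1) i"
  shows "((\<lambda>s. f (q + s *\<^sub>R axis i 1)) has_real_derivative pd i f (q + s0 *\<^sub>R axis i 1)) (at s0)"
proof -
  let ?p = "q + s0 *\<^sub>R axis i 1"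
  have "((\<lambda>t. f (?p + t *\<^sub>R axis i 1)) has_real_derivative pd i f ?p) (at 0)" by (rule lined_DERIV[OF assms])
  moreover have "(\<lambda>t. f (?p + t *\<^sub>R axis i 1)) = (\<lambda>t. (\<lambda>s. f (q + s *\<^sub>R axis i 1)) (t + s0))"
    by (rule ext) (simp add: algebra_simps scaleR_add_left)
  ultimately have "((\<lambda>t. (\<lambda>s. f (q + s *\<^sub>R axis i 1)) (t + s0)) has_real_derivative pd i f ?p) (at 0)" by simp
  then show ?thesis using DERIV_shift[of "\<lambda>s. f (q + s *\<^sub>R axis i 1)" "pd i f ?p" 0 s0] by simp
qed

lemma mixed_mvt:
  fixes x :: "real^'n"
  assumes h: "h > 0"
    and inU: "\<And>s t. 0 \<le> s \<Longrightarrow> s \<le> h \<Longrightarrow> 0 \<le> t \<Longrightarrow> t \<le> h \<Longrightarrow> x + s *\<^sub>R axis i 1 + t *\<^sub>R axis j 1 \<in> U"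
    and l1: "\<And>y. y \<in> U \<Longrightarrow> lined f y i" and l2: "\<And>y. y \<in> U \<Longrightarrow> lined (pd i f) y j"
  shows "\<exists>\<sigma> \<tau>. 0 < \<sigma> \<and> \<sigma> < h \<and> 0 < \<tau> \<and> \<tau> < h \<and>
    f (x + h *\<^sub>R axis i 1 + h *\<^sub>R axis j 1) - f (x + h *\<^sub>R axis i 1) - f (x + h *\<^sub>R axis j 1) + f x
     = h * h * pd j (pd i f) (x + \<sigma> *\<^sub>R axis i 1 + \<tau> *\<^sub>R axis j 1)"
proof -
  define ei where "ei = (axis i 1 :: real^'n)"
  define ej where "ej = (axis j 1 :: real^'n)"
  define \<phi> where "\<phi> s = f ((x + h *\<^sub>R ej) + s *\<^sub>R ei) - f (x + s *\<^sub>R ei)" for s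
  have d\<phi>: "DERIV \<phi> s :> pd i f ((x + h *\<^sub>R ej) + s *\<^sub>R ei) - pd i f (x + s *\<^sub>R ei)" if "0 \<le> s" "s \<le> h" for s
  proof -
    have a: "x + h *\<^sub>R ej + s *\<^sub>R ei \<in> U" using inU[of s h] that h unfolding ei_def ej_def by (simp add: algebra_simps)
    have b: "x + s *\<^sub>R ei \<in> U" using inU[of s 0] that h unfolding ei_def ej_def by simp
    show ?thesis unfolding \<phi>_def ei_def
      by (intro DERIV_diff line_DERIV_at l1) (use a b in \<open>simp_all add: ei_def\<close>)
  qed
  obtain \<sigma> where \<sigma>: "0 < \<sigma>" "\<sigma> < h" "\<phi> h - \<phi> 0 = (h - 0) * (pd i f ((x + h *\<^sub>R ej) + \<sigma> *\<^sub>R ei) - pd i f (x + \<sigma> *\<^sub>R ei))"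
    using MVT2[OF h, of \<phi> "\<lambda>s. pd i f ((x + h *\<^sub>R ej) + s *\<^sub>R ei) - pd i f (x + s *\<^sub>R ei)"] d\<phi> by blast
  define \<psi> where "\<psi> t = pd i f ((x + \<sigma> *\<^sub>R ei) + t *\<^sub>R ej)" for t
  have d\<psi>: "DERIV \<psi> t :> pd j (pd i f) ((x + \<sigma> *\<^sub>R ei) + t *\<^sub>R ej)" if "0 \<le> t" "t \<le> h" for t
  proof -
    have a: "x + \<sigma> *\<^sub>R ei + t *\<^sub>R ej \<in> U" using inU[of \<sigma> t] that \<sigma> unfolding ei_def ej_def by simp
    show ?thesis unfolding \<psi>_def ej_def
      by (intro line_DERIV_at l2) (use a in \<open>simp add: ej_def\<close>)
  qed
  obtain \<tau> where \<tau>: "0 < \<tau>" "\<tau> < h" "\<psi> h - \<psi> 0 = (h - 0) * pd j (pd i f) ((x + \<sigma> *\<^sub>R ei) + \<tau> *\<^sub>R ej)"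
    using MVT2[OF h, of \<psi> "\<lambda>t. pd j (pd i f) ((x + \<sigma> *\<^sub>R ei) + t *\<^sub>R ej)"] d\<psi> by blast
  have e1: "pd i f ((x + h *\<^sub>R ej) + \<sigma> *\<^sub>R ei) - pd i f (x + \<sigma> *\<^sub>R ei) = \<psi> h - \<psi> 0"
    unfolding \<psi>_def by (simp add: algebra_simps)
  have "f (x + h *\<^sub>R ei + h *\<^sub>R ej) - f (x + h *\<^sub>R ei) - f (x + h *\<^sub>R ej) + f x = \<phi> h - \<phi> 0"
    unfolding \<phi>_def by (simp add: algebra_simps)
  also have "\<dots> = h * h * pd j (pd i f) (x + \<sigma> *\<^sub>R ei + \<tau> *\<^sub>R ej)"
    using \<sigma>(3) e1 \<tau>(3) by simp
  finally show ?thesis using \<sigma> \<tau> unfolding ei_def ej_def by blast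
qed

lemma dist_two_axes:
  fixes x :: "real^'n"
  shows "dist (x + s *\<^sub>R axis i 1 + t *\<^sub>R axis j 1) x \<le> \<bar>s\<bar> + \<bar>t\<bar>"
proof -
  have "dist (x + s *\<^sub>R axis i 1 + t *\<^sub>R axis j 1) x = norm (s *\<^sub>R axis i (1::real) + t *\<^sub>R axis j 1)"
    by (simp add: dist_norm)
  also have "\<dots> \<le> norm (s *\<^sub>R axis i (1::real)) + norm (t *\<^sub>R axis j (1::real))" by (rule norm_triangle_ineq)
  also have "\<dots> = \<bar>s\<bar> + \<bar>t\<bar>" by simp
  finally show ?thesis .
qed

lemma schwarz_gen:
  fixes x :: "real^'n"
  assumes U: "open U" "x \<in> U"
    and l: "\<And>y k. y \<in> U \<Longrightarrow> lined f y k" "\<And>y k. y \<in> U \<Longrightarrow> lined (pd i f) y k" "\<And>y k. y \<in> U \<Longrightarrow> lined (pd j f) y k"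
    and c1: "isCont (pd j (pd i f)) x" and c2: "isCont (pd i (pd j f)) x"
  shows "pd j (pd i f) x = pd i (pd j f) x"
proof (rule ccontr)
  let ?a = "pd j (pd i f) x" and ?b = "pd i (pd j f) x"
  assume ne: "?a \<noteq> ?b"
  define \<epsilon> where "\<epsilon> = \<bar>?a - ?b\<bar> / 2"
  have \<epsilon>: "\<epsilon> > 0" using ne unfolding \<epsilon>_def by simp
  obtain r where r: "r > 0" "ball x r \<subseteq> U" using U openE by blast
  obtain d1 where d1: "d1 > 0" "\<And>y. dist y x < d1 \<Longrightarrow> dist (pd j (pd i f) y) ?a < \<epsilon>"
    using c1 \<epsilon> unfolding isCont_def LIM_def by (metis dist_self)
  obtain d2 where d2: "d2 > 0" "\<And>y. dist y x < d2 \<Longrightarrow> dist (pd i (pd j f) y) ?b < \<epsilon>"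
    using c2 \<epsilon> unfolding isCont_def LIM_def by (metis dist_self)
  define h where "h = min r (min d1 d2) / 3"
  have h: "h > 0" "2 * h < r" "2 * h < d1" "2 * h < d2" using r d1 d2 unfolding h_def by auto
  have inU: "x + s *\<^sub>R axis k 1 + t *\<^sub>R axis k' 1 \<in> U" if "0 \<le> s" "s \<le> h" "0 \<le> t" "t \<le> h" for s t k k'
  proof -
    have "dist (x + s *\<^sub>R axis k 1 + t *\<^sub>R axis k' 1) x \<le> \<bar>s\<bar> + \<bar>t\<bar>" by (rule dist_two_axes)
    also have "\<dots> < r" using that h by auto
    finally show ?thesis using r(2) by (auto simp: dist_commute)
  qed
  obtain \<sigma> \<tau> where st: "0 < \<sigma>" "\<sigma> < h" "0 < \<tau>" "\<tau> < h"
    "f (x + h *\<^sub>R axis i 1 + h *\<^sub>R axis j 1) - f (x + h *\<^sub>R axis i 1) - f (x + h *\<^sub>R axis j 1) + f x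
     = h * h * pd j (pd i f) (x + \<sigma> *\<^sub>R axis i 1 + \<tau> *\<^sub>R axis j 1)"
    using mixed_mvt[OF h(1), of x i j U f] inU l by blast
  obtain \<sigma>' \<tau>' where st': "0 < \<sigma>'" "\<sigma>' < h" "0 < \<tau>'" "\<tau>' < h"
    "f (x + h *\<^sub>R axis j 1 + h *\<^sub>R axis i 1) - f (x + h *\<^sub>R axis j 1) - f (x + h *\<^sub>R axis i 1) + f x
     = h * h * pd i (pd j f) (x + \<sigma>' *\<^sub>R axis j 1 + \<tau>' *\<^sub>R axis i 1)"
    using mixed_mvt[OF h(1), of x j i U f] inU l by blast
  have "h * h * pd j (pd i f) (x + \<sigma> *\<^sub>R axis i 1 + \<tau> *\<^sub>R axis j 1)
      = h * h * pd i (pd j f) (x + \<sigma>' *\<^sub>R axis j 1 + \<tau>' *\<^sub>R axis i 1)"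
    using st(5) st'(5) by (simp add: algebra_simps)
  then have eq: "pd j (pd i f) (x + \<sigma> *\<^sub>R axis i 1 + \<tau> *\<^sub>R axis j 1) = pd i (pd j f) (x + \<sigma>' *\<^sub>R axis j 1 + \<tau>' *\<^sub>R axis i 1)"
    using h(1) by simp
  have "dist (x + \<sigma> *\<^sub>R axis i 1 + \<tau> *\<^sub>R axis j 1) x < d1"
    using dist_two_axes[of x \<sigma> i \<tau> j] st h by auto
  then have A: "dist (pd j (pd i f) (x + \<sigma> *\<^sub>R axis i 1 + \<tau> *\<^sub>R axis j 1)) ?a < \<epsilon>" by (rule d1(2))
  have "dist (x + \<sigma>' *\<^sub>R axis j 1 + \<tau>' *\<^sub>R axis i 1) x < d2"
    using dist_two_axes[of x \<sigma>' j \<tau>' i] st' h by auto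
  then have B: "dist (pd i (pd j f) (x + \<sigma>' *\<^sub>R axis j 1 + \<tau>' *\<^sub>R axis i 1)) ?b < \<epsilon>" by (rule d2(2))
  from A B eq have "\<bar>?a - ?b\<bar> < 2 * \<epsilon>" by (simp add: dist_real_def)
  then show False unfolding \<epsilon>_def by simp
qed

lemma schwarz:
  assumes "CS S f" "x \<in> interior S"
  shows "pd j (pd i f) x = pd i (pd j f) x"
proof (rule schwarz_gen[OF open_interior assms(2)])
  show "lined f y k" if "y \<in> interior S" for y k using goodD(1)[OF CS_good[OF assms(1)] that] .
  show "lined (pd i f) y k" if "y \<in> interior S" for y k using goodD(1)[OF CS_good[OF CS_pd[OF assms(1)]] that] .
  show "lined (pd j f) y k" if "y \<in> interior S" for y k using goodD(1)[OF CS_good[OF CS_pd[OF assms(1)]] that] .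
  show "isCont (pd j (pd i f)) x"
    using goodD(2)[OF CS_good[OF CS_pd[OF CS_pd[OF assms(1)]]]] assms(2)
    by (simp add: continuous_on_eq_continuous_at)
  show "isCont (pd i (pd j f)) x"
    using goodD(2)[OF CS_good[OF CS_pd[OF CS_pd[OF assms(1)]]]] assms(2)
    by (simp add: continuous_on_eq_continuous_at)
qed


lemma ipd_swap:
  assumes "CS S f" "x \<in> interior S"
  shows "ipd (as @ i # j # bs) f x = ipd (as @ j # i # bs) f x"
proof -
  have "\<And>y. y \<in> interior S \<Longrightarrow> ipd (i # j # bs) f y = ipd (j # i # bs) f y"
    using schwarz[OF CS_ipd[OF assms(1), of bs]] by simp
  then have "ipd as (ipd (i # j # bs) f) x = ipd as (ipd (j # i # bs) f) x"
    by (intro ipd_local[OF open_interior _ assms(2)])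
  then show ?thesis by (simp add: ipd_append)
qed

lemma ipd_bubble:
  assumes "CS S f"
  shows "a \<in> set xs \<Longrightarrow> x \<in> interior S \<Longrightarrow> ipd xs f x = ipd (a # remove1 a xs) f x"
proof (induction xs arbitrary: x)
  case Nil then show ?case by simp
next
  case (Cons b ys)
  show ?case
  proof (cases "a = b")
    case True then show ?thesis by simp
  next
    case False
    then have a: "a \<in> set ys" using Cons.prems by simp
    have "ipd (b # ys) f x = pd b (ipd ys f) x" by simp
    also have "\<dots> = pd b (ipd (a # remove1 a ys) f) x"
      by (rule pd_local[OF open_interior Cons.prems(2)]) (rule Cons.IH[OF a])
    also have "\<dots> = ipd ([] @ b # a # remove1 a ys) f x" by simp
    also have "\<dots> = ipd ([] @ a # b # remove1 a ys) f x" by (rule ipd_swap[OF assms Cons.prems(2)])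
    finally show ?thesis using False by simp
  qed
qed

lemma ipd_perm:
  assumes "CS S f"
  shows "mset xs = mset ys \<Longrightarrow> x \<in> interior S \<Longrightarrow> ipd xs f x = ipd ys f x"
proof (induction xs arbitrary: ys x)
  case Nil then show ?case by simp
next
  case (Cons a xs)
  have a: "a \<in> set ys" using Cons.prems(1) by (metis list.set_intros(1) set_mset_mset)
  have "mset (remove1 a ys) = mset ys - {#a#}" by (rule mset_remove1)
  also have "\<dots> = mset xs" using Cons.prems(1)[symmetric] by simp
  finally have m: "mset xs = mset (remove1 a ys)" by simp
  have "ipd (a # xs) f x = pd a (ipd (remove1 a ys) f) x"
    using pd_local[OF open_interior Cons.prems(2), of "ipd xs f" "ipd (remove1 a ys) f" a] Cons.IH[OF m] by simp
  also have "\<dots> = ipd ys f x" using ipd_bubble[OF assms a Cons.prems(2)] by simp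
  finally show ?case .
qed

lemma jc_perm:
  assumes "CS S f" "mset xs = mset ys"
  shows "jc S xs f x = jc S ys f x"
proof -
  have "eventually (\<lambda>y. ipd xs f y = ipd ys f y) (at x within interior S)"
    unfolding eventually_at_filter by (rule always_eventually) (use ipd_perm[OF assms] in auto)
  then show ?thesis unfolding jc_def by (rule Lim_cong) simp
qed

lemma mset_split_N:
  "mset xs = mset (filter (\<lambda>a. a \<noteq> N) xs @ replicate (count_list xs N) N)"
  by (induction xs) auto

section \<open>The half-space setting\<close>

lemma openin_half_ball:
  assumes "openin (top_of_set (halfspace N)) S" "x \<in> S"
  shows "\<exists>r>0. \<forall>y. y $ N \<ge> 0 \<longrightarrow> dist y x < r \<longrightarrow> y \<in> S"
proof -
  obtain r where "r > 0" "\<forall>y\<in>halfspace N. dist y x < r \<longrightarrow> y \<in> S"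
    using assms unfolding openin_euclidean_subtopology_iff by (metis dist_commute)
  then show ?thesis unfolding halfspace_def by auto
qed

lemma comp_dist_le: "\<bar>z $ N - y $ N\<bar> \<le> dist z (y :: real^'n)"
  unfolding dist_norm using component_le_norm_cart[of "z - y" N] by simp

lemma pos_in_interior:
  fixes x y :: "real^'n"
  assumes r: "\<forall>z. z $ N \<ge> 0 \<longrightarrow> dist z x < r \<longrightarrow> z \<in> S" and y: "y $ N > 0" "dist y x < r"
  shows "y \<in> interior S"
proof -
  define \<rho> where "\<rho> = min (y $ N) (r - dist y x)"
  have \<rho>: "\<rho> > 0" using y unfolding \<rho>_def by auto
  have "ball y \<rho> \<subseteq> S"
  proof
    fix z assume "z \<in> ball y \<rho>"
    then have d: "dist z y < \<rho>" by (simp add: dist_commute)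
    have "z $ N \<ge> 0" using comp_dist_le[of z N y] d unfolding \<rho>_def by auto
    moreover have "dist z x < r" using dist_triangle[of z x y] d unfolding \<rho>_def by auto
    ultimately show "z \<in> S" using r by blast
  qed
  then show ?thesis using \<rho> by (meson interiorI open_ball centre_in_ball)
qed

lemma axis_comp: "(s *\<^sub>R axis i (1::real) :: real^'n) $ k = (if k = i then s else 0)"
  by (simp add: axis_def)

lemma tangential_zero:
  fixes S :: "(real^'n) set"
  assumes S_open: "openin (top_of_set (halfspace N)) S" and u: "CS S u" and reg: "S \<subseteq> closure (interior S)"
    and z: "\<And>y. y \<in> S \<Longrightarrow> y $ N = 0 \<Longrightarrow> jc S [] u y = 0"
    and x: "x \<in> S" "x $ N = 0" and iN: "i \<noteq> N"
  shows "jc S [i] u x = 0"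
proof (rule ccontr)
  define L where "L = jc S [i] u x"
  assume "jc S [i] u x \<noteq> 0"
  then have L0: "L \<noteq> 0" unfolding L_def .
  define \<epsilon> where "\<epsilon> = \<bar>L\<bar> / 2"
  have \<epsilon>: "\<epsilon> > 0" using L0 unfolding \<epsilon>_def by simp
  have tL: "(pd i u \<longlongrightarrow> L) (at x within interior S)"
    using jc_tendsto[OF reg x(1) CS_good[OF CS_ipd[OF u, of "[i]"]]] unfolding L_def by simp
  obtain \<delta> where \<delta>: "\<delta> > 0" "\<And>y. y \<in> interior S \<Longrightarrow> y \<noteq> x \<Longrightarrow> dist y x < \<delta> \<Longrightarrow> dist (pd i u y) L < \<epsilon>"
    using tL \<epsilon> unfolding tendsto_iff eventually_at by blast
  obtain r where r: "r > 0" "\<forall>y. y $ N \<ge> 0 \<longrightarrow> dist y x < r \<longrightarrow> y \<in> S"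
    using openin_half_ball[OF S_open x(1)] by blast
  define t where "t = min \<delta> r / 3"
  have t: "t > 0" "2 * t < \<delta>" "2 * t < r" using \<delta> r unfolding t_def by auto
  define \<eta> where "\<eta> = t * \<bar>L\<bar> / 8"
  have \<eta>: "\<eta> > 0" using t L0 unfolding \<eta>_def by simp
  define p1 where "p1 = x + t *\<^sub>R axis i 1"
  have p1N: "p1 $ N = 0" using x(2) iN unfolding p1_def by (simp add: axis_def)
  have p1d: "dist p1 x = t" using t unfolding p1_def by (simp add: dist_norm)
  have p1S: "p1 \<in> S" using r(2) p1N p1d t by auto
  have tu: "(u \<longlongrightarrow> 0) (at y within interior S)" if "y \<in> S" "y $ N = 0" for y
    using jc_tendsto[OF reg that(1), of "[]" u] CS_good[OF u] z[OF that] by simp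
  obtain \<delta>1 where \<delta>1: "\<delta>1 > 0" "\<And>y. y \<in> interior S \<Longrightarrow> y \<noteq> p1 \<Longrightarrow> dist y p1 < \<delta>1 \<Longrightarrow> dist (u y) 0 < \<eta>"
    using tu[OF p1S p1N] \<eta> unfolding tendsto_iff eventually_at by blast
  obtain \<delta>0 where \<delta>0: "\<delta>0 > 0" "\<And>y. y \<in> interior S \<Longrightarrow> y \<noteq> x \<Longrightarrow> dist y x < \<delta>0 \<Longrightarrow> dist (u y) 0 < \<eta>"
    using tu[OF x] \<eta> unfolding tendsto_iff eventually_at by blast
  define s where "s = min t (min \<delta>0 \<delta>1) / 2"
  have s: "s > 0" "s < t" "s < \<delta>0" "s < \<delta>1" using t \<delta>0 \<delta>1 unfolding s_def by auto
  define q where "q = x + s *\<^sub>R axis N 1"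
  have yint: "q + \<tau> *\<^sub>R axis i 1 \<in> interior S" "q + \<tau> *\<^sub>R axis i 1 \<noteq> x" "dist (q + \<tau> *\<^sub>R axis i 1) x < \<delta>"
    if "0 \<le> \<tau>" "\<tau> \<le> t" for \<tau>
  proof -
    have N: "(q + \<tau> *\<^sub>R axis i 1) $ N = s" using x(2) iN unfolding q_def by (simp add: axis_def)
    have d: "dist (q + \<tau> *\<^sub>R axis i 1) x \<le> s + \<tau>"
      using dist_two_axes[of x s N \<tau> i] s that unfolding q_def by simp
    show "dist (q + \<tau> *\<^sub>R axis i 1) x < \<delta>" using d s t that by linarith
    show "q + \<tau> *\<^sub>R axis i 1 \<in> interior S"
      by (rule pos_in_interior[OF r(2)]) (use N s d t that in auto)
    show "q + \<tau> *\<^sub>R axis i 1 \<noteq> x" using N s x(2) by auto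
  qed
  have der: "DERIV (\<lambda>\<tau>. u (q + \<tau> *\<^sub>R axis i 1)) \<tau> :> pd i u (q + \<tau> *\<^sub>R axis i 1)" if "0 \<le> \<tau>" "\<tau> \<le> t" for \<tau>
    by (rule line_DERIV_at) (rule goodD(1)[OF CS_good[OF u] yint(1)[OF that]])
  obtain \<tau> where \<tau>: "0 < \<tau>" "\<tau> < t" "u (q + t *\<^sub>R axis i 1) - u (q + 0 *\<^sub>R axis i 1) = (t - 0) * pd i u (q + \<tau> *\<^sub>R axis i 1)"
    using MVT2[OF t(1), of "\<lambda>\<tau>. u (q + \<tau> *\<^sub>R axis i 1)" "\<lambda>\<tau>. pd i u (q + \<tau> *\<^sub>R axis i 1)"] der by blast
  have "dist (pd i u (q + \<tau> *\<^sub>R axis i 1)) L < \<epsilon>"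
    using \<delta>(2) yint[of \<tau>] \<tau> by auto
  then have big: "\<bar>pd i u (q + \<tau> *\<^sub>R axis i 1)\<bar> > \<bar>L\<bar> / 2" unfolding \<epsilon>_def dist_real_def by linarith
  have A: "\<bar>u (q + t *\<^sub>R axis i 1)\<bar> < \<eta>"
  proof -
    have "q + t *\<^sub>R axis i 1 - p1 = s *\<^sub>R axis N 1" unfolding q_def p1_def by simp
    then have dd: "dist (q + t *\<^sub>R axis i 1) p1 = s" using s by (simp add: dist_norm)
    have "(q + t *\<^sub>R axis i 1) \<noteq> p1" using dd s by auto
    then show ?thesis using \<delta>1(2)[of "q + t *\<^sub>R axis i 1"] yint(1)[of t] t dd s by auto
  qed
  have B: "\<bar>u q\<bar> < \<eta>"
  proof -
    have dd: "dist q x = s" using s unfolding q_def by (simp add: dist_norm)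
    have "q = q + 0 *\<^sub>R axis i 1" by simp
    then have "q \<in> interior S" "q \<noteq> x" using yint[of 0] t by auto
    then show ?thesis using \<delta>0(2)[of q] dd s by auto
  qed
  have "\<bar>u (q + t *\<^sub>R axis i 1) - u q\<bar> = t * \<bar>pd i u (q + \<tau> *\<^sub>R axis i 1)\<bar>"
    using \<tau>(3) t by (simp add: abs_mult)
  also have "\<dots> \<ge> t * (\<bar>L\<bar> / 2)" using big t by (intro mult_left_mono) auto
  finally have C: "\<bar>u (q + t *\<^sub>R axis i 1) - u q\<bar> \<ge> t * \<bar>L\<bar> / 2" by simp
  from A B have "\<bar>u (q + t *\<^sub>R axis i 1) - u q\<bar> < 2 * \<eta>" by linarith
  moreover have "t * \<bar>L\<bar> > 0" using t L0 by simp
  ultimately show False using C unfolding \<eta>_def by linarith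
qed

lemma tangential_all:
  fixes S :: "(real^'n) set"
  assumes S_open: "openin (top_of_set (halfspace N)) S" and u: "CS S u" and reg: "S \<subseteq> closure (interior S)"
    and z: "\<And>y. y \<in> S \<Longrightarrow> y $ N = 0 \<Longrightarrow> jc S [] u y = 0"
  shows "N \<notin> set ts \<Longrightarrow> y \<in> S \<Longrightarrow> y $ N = 0 \<Longrightarrow> jc S ts u y = 0"
proof (induction ts arbitrary: y)
  case Nil then show ?case using z by simp
next
  case (Cons i ts)
  have "jc S (i # ts) u y = jc S [i] (ipd ts u) y" using jc_append[of S "[i]" ts u] by simp
  also have "\<dots> = 0"
  proof (rule tangential_zero[OF S_open CS_ipd[OF u] reg _ Cons.prems(2,3)])
    show "i \<noteq> N" using Cons.prems(1) by auto
    fix y' assume "y' \<in> S" "y' $ N = 0"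
    then show "jc S [] (ipd ts u) y' = 0" using Cons.IH[of y'] Cons.prems(1) jc_append[of S "[]" ts u] by simp
  qed
  finally show ?case .
qed

lemma agr_from_normal:
  fixes S :: "(real^'n) set"
  assumes S_open: "openin (top_of_set (halfspace N)) S" and reg: "S \<subseteq> closure (interior S)"
    and u: "CS S u1" "CS S u2"
    and h: "\<And>k y. k \<le> m \<Longrightarrow> y \<in> S \<Longrightarrow> y $ N = 0 \<Longrightarrow> jc S (replicate k N) u1 y = jc S (replicate k N) u2 y"
  shows "agr N S {y\<in>S. y $ N = 0} m u1 u2"
  unfolding agr_def
proof (intro allI ballI impI)
  fix "is" y assume y: "y \<in> {y\<in>S. y $ N = 0}" and c: "count_list is N \<le> m"
  define k where "k = count_list is N"
  define ts where "ts = filter (\<lambda>a. a \<noteq> N) is"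
  have m: "mset is = mset (ts @ replicate k N)" unfolding ts_def k_def by (rule mset_split_N)
  define w where "w = (\<lambda>z. ipd (replicate k N) u1 z - ipd (replicate k N) u2 z)"
  have yS: "y \<in> S" "y $ N = 0" using y by auto
  have cw: "CS S w" unfolding w_def by (intro CS_diff CS_ipd u)
  have wz: "jc S [] w y' = 0" if "y' \<in> S" "y' $ N = 0" for y'
  proof -
    have "jc S [] w y' = jc S [] (ipd (replicate k N) u1) y' - jc S [] (ipd (replicate k N) u2) y'"
      unfolding w_def by (rule jc_diff[OF reg that(1)]) (intro CS_ipd u)+
    also have "\<dots> = jc S (replicate k N) u1 y' - jc S (replicate k N) u2 y'"
      using jc_append[of S "[]" "replicate k N"] by simp
    also have "\<dots> = 0" using h[OF _ that] c unfolding k_def by simp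
    finally show ?thesis .
  qed
  have "jc S ts w y = 0"
    by (rule tangential_all[OF S_open cw reg wz]) (use yS in \<open>auto simp: ts_def\<close>)
  moreover have "jc S ts w y = jc S ts (ipd (replicate k N) u1) y - jc S ts (ipd (replicate k N) u2) y"
    unfolding w_def by (rule jc_diff[OF reg yS(1)]) (intro CS_ipd u)+
  ultimately have "jc S (ts @ replicate k N) u1 y = jc S (ts @ replicate k N) u2 y"
    by (simp add: jc_append)
  then show "jc S is u1 y = jc S is u2 y"
    using jc_perm[OF u(1) m] jc_perm[OF u(2) m] by simp
qed


section \<open>Matrices and determinants\<close>

lemma det_tendsto:
  fixes M :: "'b \<Rightarrow> real^'n^'n"
  assumes "\<And>a b. ((\<lambda>y. M y $ a $ b) \<longlongrightarrow> M0 $ a $ b) F"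
  shows "((\<lambda>y. det (M y)) \<longlongrightarrow> det M0) F"
  unfolding det_def by (intro tendsto_sum tendsto_mult tendsto_const tendsto_prod assms)

lemma CS_det:
  assumes "\<And>a b. CS S (\<lambda>y. M y $ a $ b)"
  shows "CS S (\<lambda>y. det (M y))"
  unfolding det_def
  by (intro CS_sum CS_mult CS_const CS_prod assms finite_permutations) auto

lemma invertible_matrix_inv:
  assumes "invertible A"
  shows "A ** matrix_inv A = mat 1" "matrix_inv A ** A = mat 1"
proof -
  have "\<exists>A'. A ** A' = mat 1 \<and> A' ** A = mat 1" using assms unfolding invertible_def .
  then have "A ** matrix_inv A = mat 1 \<and> matrix_inv A ** A = mat 1"
    unfolding matrix_inv_def by (rule someI_ex)
  then show "A ** matrix_inv A = mat 1" "matrix_inv A ** A = mat 1" by auto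
qed

lemma posdef_det_nz:
  fixes A :: "real^'n^'n"
  assumes "\<forall>v. v \<noteq> 0 \<longrightarrow> v \<bullet> (A *v v) > 0"
  shows "det A \<noteq> 0"
proof -
  have "\<forall>x. A *v x = 0 \<longrightarrow> x = 0"
  proof (intro allI impI)
    fix x assume "A *v x = 0"
    then have "x \<bullet> (A *v x) = 0" by simp
    then show "x = 0" using assms by (metis less_irrefl)
  qed
  then have "\<exists>B. B ** A = mat 1" by (simp add: matrix_left_invertible_ker)
  then show ?thesis using invertible_left_inverse invertible_det_nz by blast
qed

lemma matrix_inv_cramer:
  fixes A :: "real^'n^'n"
  assumes "det A \<noteq> 0"
  shows "matrix_inv A $ k $ l = det (\<chi> a b. if b = k then (if a = l then 1 else 0) else A $ a $ b) / det A"
proof -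
  have inv: "invertible A" using assms invertible_det_nz by blast
  have "A *v (matrix_inv A *v axis l 1) = axis l 1"
    by (simp add: matrix_vector_mul_assoc invertible_matrix_inv(1)[OF inv])
  then have "matrix_inv A *v axis l 1 = (\<chi> k. det (\<chi> i j. if j = k then axis l 1 $ i else A $ i $ j) / det A)"
    using cramer[OF assms] by blast
  then have "(matrix_inv A *v axis l 1) $ k = det (\<chi> i j. if j = k then axis l 1 $ i else A $ i $ j) / det A"
    by simp
  moreover have "(matrix_inv A *v axis l 1) $ k = matrix_inv A $ k $ l"
    by (simp add: matrix_vector_mult_def axis_def if_distrib cong: if_cong)
  moreover have "(\<chi> i j. if j = k then axis l 1 $ i else A $ i $ j) = (\<chi> a b. if b = k then (if a = l then 1 else 0) else A $ a $ b)"
    by (simp add: axis_def vec_eq_iff)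
  ultimately show ?thesis by simp
qed

lemma normal_inv_NN:
  fixes A :: "real^'n^'n"
  assumes "det A \<noteq> 0" "A $ N $ N = 1" "\<And>i. i \<noteq> N \<Longrightarrow> A $ i $ N = 0"
  shows "matrix_inv A $ N $ N = 1"
proof -
  have inv: "invertible A" using assms invertible_det_nz by blast
  have Ae: "A *v axis N 1 = axis N 1"
  proof -
    have "(A *v axis N 1) $ i = axis N 1 $ i" for i
      using assms(2) assms(3)[of i] by (cases "i = N") (simp_all add: matrix_vector_mult_def axis_def if_distrib cong: if_cong)
    then show ?thesis by (simp add: vec_eq_iff)
  qed
  have "matrix_inv A *v axis N 1 = matrix_inv A *v (A *v axis N 1)" using Ae by simp
  also have "\<dots> = axis N 1" by (simp add: matrix_vector_mul_assoc invertible_matrix_inv(2)[OF inv])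
  finally have "(matrix_inv A *v axis N 1) $ N = 1" by (simp add: axis_def)
  moreover have "(matrix_inv A *v axis N 1) $ N = matrix_inv A $ N $ N"
    by (simp add: matrix_vector_mult_def axis_def if_distrib cong: if_cong)
  ultimately show ?thesis by simp
qed

lemma su_tendsto: "smooth_upto S f \<Longrightarrow> x \<in> S \<Longrightarrow> (f \<longlongrightarrow> f x) (at x within interior S)"
  unfolding smooth_upto_alt by blast

lemma su_CS: "smooth_upto S f \<Longrightarrow> CS S f"
  unfolding smooth_upto_alt by blast

lemma su_reg: "smooth_upto S f \<Longrightarrow> S \<subseteq> closure (interior S)"
  unfolding smooth_upto_alt by blast

lemma nzb_det:
  assumes "\<And>a b. smooth_upto S (\<lambda>y. M y $ a $ b)" "\<And>x. x \<in> S \<Longrightarrow> det (M x) \<noteq> 0"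
  shows "nzb S (\<lambda>y. det (M y))"
  unfolding nzb_def
proof (intro conjI ballI)
  show "det (M x) \<noteq> 0" if "x \<in> interior S" for x using assms(2) that interior_subset by blast
  show "\<exists>L. ((\<lambda>y. det (M y)) \<longlongrightarrow> L) (at x within interior S) \<and> L \<noteq> 0" if "x \<in> S" for x
  proof -
    have "((\<lambda>y. det (M y)) \<longlongrightarrow> det (M x)) (at x within interior S)"
      by (rule det_tendsto) (rule su_tendsto[OF assms(1) that])
    then show ?thesis using assms(2)[OF that] by blast
  qed
qed

locale hsp =
  fixes N :: "'n::finite" and S :: "(real^'n) set"
  assumes S_open: "openin (top_of_set (halfspace N)) S"
    and reg: "S \<subseteq> closure (interior S)"
begin

definition Bd :: "(real^'n) set" where "Bd = {x\<in>S. x $ N = 0}"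

lemma Bd_sub: "Bd \<subseteq> S" unfolding Bd_def by auto

definition PP :: "(real^'n \<Rightarrow> real) \<Rightarrow> (real^'n \<Rightarrow> real) \<Rightarrow> bool" where
  "PP f1 f2 \<longleftrightarrow> CS S f1 \<and> CS S f2 \<and> (\<forall>m. agr N S Bd m f1 f2)"

lemma PP_add: "PP f1 f2 \<Longrightarrow> PP g1 g2 \<Longrightarrow> PP (\<lambda>y. f1 y + g1 y) (\<lambda>y. f2 y + g2 y)"
  unfolding PP_def by (auto intro!: CS_add agr_add[OF reg Bd_sub])

lemma PP_diff: "PP f1 f2 \<Longrightarrow> PP g1 g2 \<Longrightarrow> PP (\<lambda>y. f1 y - g1 y) (\<lambda>y. f2 y - g2 y)"
  unfolding PP_def by (auto intro!: CS_diff agr_diff[OF reg Bd_sub])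

lemma PP_mult: "PP f1 f2 \<Longrightarrow> PP g1 g2 \<Longrightarrow> PP (\<lambda>y. f1 y * g1 y) (\<lambda>y. f2 y * g2 y)"
  unfolding PP_def by (auto intro!: CS_mult agr_mult[OF reg Bd_sub])

lemma PP_const: "PP (\<lambda>y. c) (\<lambda>y. c)"
  unfolding PP_def by (auto intro!: CS_const agr_refl)

lemma PP_pd: "PP f1 f2 \<Longrightarrow> PP (pd i f1) (pd i f2)"
  unfolding PP_def by (auto intro!: CS_pd agr_pd_gen[where m="Suc _"])

lemma PP_quot: "PP f1 f2 \<Longrightarrow> PP g1 g2 \<Longrightarrow> nzb S g1 \<Longrightarrow> nzb S g2 \<Longrightarrow> PP (\<lambda>y. f1 y / g1 y ^ k) (\<lambda>y. f2 y / g2 y ^ k)"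
  unfolding PP_def by (auto intro!: CS_quot agr_quot[OF reg Bd_sub])

lemma PP_div: "PP f1 f2 \<Longrightarrow> PP g1 g2 \<Longrightarrow> nzb S g1 \<Longrightarrow> nzb S g2 \<Longrightarrow> PP (\<lambda>y. f1 y / g1 y) (\<lambda>y. f2 y / g2 y)"
  using PP_quot[of f1 f2 g1 g2 1] by simp

lemma PP_sum: "finite A \<Longrightarrow> (\<And>a. a \<in> A \<Longrightarrow> PP (f1 a) (f2 a)) \<Longrightarrow> PP (\<lambda>y. \<Sum>a\<in>A. f1 a y) (\<lambda>y. \<Sum>a\<in>A. f2 a y)"
  unfolding PP_def by (auto intro!: CS_sum agr_sum[OF reg Bd_sub])

lemma PP_prod: "finite A \<Longrightarrow> (\<And>a. a \<in> A \<Longrightarrow> PP (f1 a) (f2 a)) \<Longrightarrow> PP (\<lambda>y. \<Prod>a\<in>A. f1 a y) (\<lambda>y. \<Prod>a\<in>A. f2 a y)"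
  unfolding PP_def by (auto intro!: CS_prod agr_prod[OF reg Bd_sub])

lemma PP_if: "PP f1 f2 \<Longrightarrow> PP g1 g2 \<Longrightarrow> PP (\<lambda>y. if c then f1 y else g1 y) (\<lambda>y. if c then f2 y else g2 y)"
  by (cases c) simp_all

lemma PP_det: "(\<And>a b. PP (\<lambda>y. M1 y $ a $ b) (\<lambda>y. M2 y $ a $ b)) \<Longrightarrow> PP (\<lambda>y. det (M1 y)) (\<lambda>y. det (M2 y))"
  unfolding det_def
  by (intro PP_sum PP_mult PP_const PP_prod finite_permutations) auto

lemma PP_cong:
  assumes "PP g1 g2" "\<And>y. y \<in> interior S \<Longrightarrow> f1 y = g1 y" "\<And>y. y \<in> interior S \<Longrightarrow> f2 y = g2 y"
  shows "PP f1 f2"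
  unfolding PP_def
proof (intro conjI allI)
  show "CS S f1" by (rule CS_local[of S g1]) (use assms PP_def in auto)
  show "CS S f2" by (rule CS_local[of S g2]) (use assms PP_def in auto)
  fix m
  show "agr N S Bd m f1 f2" unfolding agr_def
  proof (intro allI ballI impI)
    fix "is" x assume "x \<in> Bd" "count_list is N \<le> m"
    then have "jc S is g1 x = jc S is g2 x" using assms(1) unfolding PP_def agr_def by blast
    moreover have "jc S is f1 x = jc S is g1 x" "jc S is f2 x = jc S is g2 x"
      by (rule jc_local_fun, use assms in auto)+
    ultimately show "jc S is f1 x = jc S is f2 x" by simp
  qed
qed

lemma PP_from_flat:
  assumes "CS S u1" "CS S u2" "\<And>k x. x \<in> S \<Longrightarrow> x $ N = 0 \<Longrightarrow> jc S (replicate k N) (\<lambda>y. u1 y - u2 y) x = 0"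
  shows "PP u1 u2"
  unfolding PP_def
proof (intro conjI allI)
  show "CS S u1" "CS S u2" by fact+
  fix m
  show "agr N S Bd m u1 u2" unfolding Bd_def
  proof (rule agr_from_normal[OF S_open reg assms(1,2)])
    fix k y assume "y \<in> S" "y $ N = 0"
    then show "jc S (replicate k N) u1 y = jc S (replicate k N) u2 y"
      using assms(3)[of y k] jc_diff[OF reg _ assms(1,2), of y "replicate k N"] by simp
  qed
qed

end


definition Rf :: "'n::finite \<Rightarrow> (real^'n \<Rightarrow> real^'n^'n) \<Rightarrow> (real^'n \<Rightarrow> real) \<Rightarrow> real^'n \<Rightarrow> real" where
  "Rf N H f y = (real CARD('n) - 2) / (4 * (real CARD('n) - 1)) * scal H y * f y
    + (\<Sum>i\<in>UNIV. \<Sum>j\<in>UNIV. ginv H y $ i $ j * (\<Sum>k\<in>UNIV. chr H k i j y * pd k f y))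
    - (\<Sum>i\<in>UNIV. \<Sum>j\<in>UNIV. if i = N \<and> j = N then 0 else ginv H y $ i $ j * pd i (pd j f) y)"

lemma sum_split_NN:
  fixes a :: "'n::finite \<Rightarrow> 'n \<Rightarrow> real"
  shows "(\<Sum>i\<in>UNIV. \<Sum>j\<in>UNIV. a i j) = a N N + (\<Sum>i\<in>UNIV. \<Sum>j\<in>UNIV. if i = N \<and> j = N then 0 else a i j)"
proof -
  have "\<And>i. (\<Sum>j\<in>UNIV. a i j) = (\<Sum>j\<in>UNIV. if i = N \<and> j = N then a i j else 0) + (\<Sum>j\<in>UNIV. if i = N \<and> j = N then 0 else a i j)"
    by (simp add: sum.distrib[symmetric] if_distrib cong: if_cong) (metis (full_types) add.right_neutral add_0)
  then have "(\<Sum>i\<in>UNIV. \<Sum>j\<in>UNIV. a i j) = (\<Sum>i\<in>UNIV. \<Sum>j\<in>UNIV. if i = N \<and> j = N then a i j else 0) + (\<Sum>i\<in>UNIV. \<Sum>j\<in>UNIV. if i = N \<and> j = N then 0 else a i j)"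
    by (simp add: sum.distrib)
  moreover have "(\<Sum>i\<in>UNIV. \<Sum>j\<in>UNIV. if i = N \<and> j = N then a i j else 0) = a N N"
  proof -
    have "\<And>i. (\<Sum>j\<in>UNIV. if i = N \<and> j = N then a i j else 0) = (if i = N then a N N else 0)"
      by (auto simp: sum.delta)
    then show ?thesis by (simp add: sum.delta)
  qed
  ultimately show ?thesis by simp
qed

lemma pde_rearr:
  assumes "conf_lap H f y = 0" "ginv H y $ N $ N = 1"
  shows "pd N (pd N f) y = Rf N H f y"
proof -
  let ?c = "(real CARD('n) - 2) / (4 * (real CARD('n) - 1))"
  have lap: "lap H f y = (\<Sum>i\<in>UNIV. \<Sum>j\<in>UNIV. ginv H y $ i $ j * pd i (pd j f) y)
      - (\<Sum>i\<in>UNIV. \<Sum>j\<in>UNIV. ginv H y $ i $ j * (\<Sum>k\<in>UNIV. chr H k i j y * pd k f y))"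
    unfolding lap_def by (simp add: right_diff_distrib sum_subtractf)
  have "(\<Sum>i\<in>UNIV. \<Sum>j\<in>UNIV. ginv H y $ i $ j * pd i (pd j f) y)
     = pd N (pd N f) y + (\<Sum>i\<in>UNIV. \<Sum>j\<in>UNIV. if i = N \<and> j = N then 0 else ginv H y $ i $ j * pd i (pd j f) y)"
    using sum_split_NN[of "\<lambda>i j. ginv H y $ i $ j * pd i (pd j f) y" N] assms(2) by simp
  then show ?thesis using assms(1) lap unfolding conf_lap_def Rf_def by simp
qed

context hsp
begin

lemma S_half: "S \<subseteq> halfspace N"
  using openin_subset[OF S_open] by simp

lemma interior_pos:
  assumes "x \<in> interior S" shows "x $ N > 0"
proof -
  obtain e where e: "e > 0" "ball x e \<subseteq> S" using assms by (meson mem_interior)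
  have "x - (e/2) *\<^sub>R axis N 1 \<in> ball x e" using e by (simp add: dist_norm)
  then have "x - (e/2) *\<^sub>R axis N 1 \<in> halfspace N" using e S_half by blast
  then have "x $ N - e/2 \<ge> 0" unfolding halfspace_def by (simp add: axis_def)
  then show ?thesis using e by simp
qed

lemma PP_H:
  assumes "riem_metric S H1" "riem_metric S H2" "flat_bdry N S (\<lambda>x. H1 x $ i $ j - H2 x $ i $ j)"
  shows "PP (\<lambda>y. H1 y $ i $ j) (\<lambda>y. H2 y $ i $ j)"
proof (rule PP_from_flat)
  show "CS S (\<lambda>y. H1 y $ i $ j)" "CS S (\<lambda>y. H2 y $ i $ j)"
    using assms(1,2) unfolding riem_metric_def by (auto intro: su_CS)
  show "jc S (replicate k N) (\<lambda>y. H1 y $ i $ j - H2 y $ i $ j) x = 0" if "x \<in> S" "x $ N = 0" for k x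
    using assms(3) that unfolding flat_bdry_def by blast
qed

lemma det_nz_metric: "riem_metric S H \<Longrightarrow> x \<in> S \<Longrightarrow> det (H x) \<noteq> 0"
  unfolding riem_metric_def by (intro posdef_det_nz) auto

lemma ginv_NN: "riem_metric S H \<Longrightarrow> normal_form N S H \<Longrightarrow> x \<in> S \<Longrightarrow> ginv H x $ N $ N = 1"
  unfolding ginv_def normal_form_def by (intro normal_inv_NN det_nz_metric) auto

lemma PP_ginv:
  assumes m: "riem_metric S H1" "riem_metric S H2" and HH: "\<And>a b. PP (\<lambda>y. H1 y $ a $ b) (\<lambda>y. H2 y $ a $ b)"
  shows "PP (\<lambda>y. ginv H1 y $ k $ l) (\<lambda>y. ginv H2 y $ k $ l)"
proof (rule PP_cong)
  let ?M = "\<lambda>H y. (\<chi> a b. if b = k then (if a = l then 1 else 0) else H y $ a $ b) :: real^'n^'n"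
  show "ginv H1 y $ k $ l = det (?M H1 y) / det (H1 y)" if "y \<in> interior S" for y
    unfolding ginv_def by (rule matrix_inv_cramer, rule det_nz_metric[OF m(1)]) (use that interior_subset in auto)
  show "ginv H2 y $ k $ l = det (?M H2 y) / det (H2 y)" if "y \<in> interior S" for y
    unfolding ginv_def by (rule matrix_inv_cramer, rule det_nz_metric[OF m(2)]) (use that interior_subset in auto)
  have sm: "smooth_upto S (\<lambda>y. H y $ a $ b)" if "riem_metric S H" for H a b using that unfolding riem_metric_def by blast
  show "PP (\<lambda>y. det (?M H1 y) / det (H1 y)) (\<lambda>y. det (?M H2 y) / det (H2 y))"
  proof (rule PP_div)
    show "PP (\<lambda>y. det (?M H1 y)) (\<lambda>y. det (?M H2 y))"
    proof (rule PP_det)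
      fix a b
      show "PP (\<lambda>y. ?M H1 y $ a $ b) (\<lambda>y. ?M H2 y $ a $ b)"
        unfolding vec_lambda_beta by (intro PP_if PP_const HH)
    qed
    show "PP (\<lambda>y. det (H1 y)) (\<lambda>y. det (H2 y))" by (rule PP_det) (rule HH)
    show "nzb S (\<lambda>y. det (H1 y))" by (rule nzb_det[OF sm[OF m(1)] det_nz_metric[OF m(1)]])
    show "nzb S (\<lambda>y. det (H2 y))" by (rule nzb_det[OF sm[OF m(2)] det_nz_metric[OF m(2)]])
  qed
qed

lemma chr_eq: "chr H k i j = (\<lambda>x. (1/2) * (\<Sum>l\<in>UNIV. ginv H x $ k $ l *
      (pd i (\<lambda>y. H y $ j $ l) x + pd j (\<lambda>y. H y $ i $ l) x - pd l (\<lambda>y. H y $ i $ j) x)))"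
  by (rule ext) (simp add: chr_def)

lemma ricci_eq: "ricci H i j = (\<lambda>x. \<Sum>k\<in>UNIV. pd k (chr H k i j) x - pd j (chr H k i k) x
      + (\<Sum>l\<in>UNIV. chr H k k l x * chr H l i j x - chr H k j l x * chr H l i k x))"
  by (rule ext) (simp add: ricci_def)

lemma scal_eq: "scal H = (\<lambda>x. \<Sum>i\<in>UNIV. \<Sum>j\<in>UNIV. ginv H x $ i $ j * ricci H i j x)"
  by (rule ext) (simp add: scal_def)

lemma PP_chr:
  assumes G: "\<And>a b. PP (\<lambda>y. ginv H1 y $ a $ b) (\<lambda>y. ginv H2 y $ a $ b)" and HH: "\<And>a b. PP (\<lambda>y. H1 y $ a $ b) (\<lambda>y. H2 y $ a $ b)"
  shows "PP (chr H1 k i j) (chr H2 k i j)"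
  unfolding chr_eq by (intro PP_mult PP_const PP_sum PP_add PP_diff PP_pd G HH finite_UNIV) simp_all

lemma PP_ricci:
  assumes G: "\<And>a b. PP (\<lambda>y. ginv H1 y $ a $ b) (\<lambda>y. ginv H2 y $ a $ b)" and HH: "\<And>a b. PP (\<lambda>y. H1 y $ a $ b) (\<lambda>y. H2 y $ a $ b)"
  shows "PP (ricci H1 i j) (ricci H2 i j)"
  unfolding ricci_eq by (intro PP_mult PP_sum PP_add PP_diff PP_pd PP_chr[OF G HH] finite_UNIV) simp_all

lemma PP_scal:
  assumes G: "\<And>a b. PP (\<lambda>y. ginv H1 y $ a $ b) (\<lambda>y. ginv H2 y $ a $ b)" and HH: "\<And>a b. PP (\<lambda>y. H1 y $ a $ b) (\<lambda>y. H2 y $ a $ b)"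
  shows "PP (scal H1) (scal H2)"
  unfolding scal_eq by (intro PP_mult PP_sum PP_ricci[OF G HH] G finite_UNIV) simp_all

end


lemma Rf_eq: "Rf N H f = (\<lambda>y. (real CARD('n) - 2) / (4 * (real CARD('n) - 1)) * scal H y * f y
    + (\<Sum>i\<in>UNIV. \<Sum>j\<in>UNIV. ginv H y $ i $ j * (\<Sum>k\<in>UNIV. chr H k i j y * pd k f y))
    - (\<Sum>i\<in>UNIV. \<Sum>j\<in>UNIV. if i = N \<and> j = N then 0 else ginv H y $ i $ j * pd i (pd j f) y))"
  for N :: "'n::finite"
  by (rule ext) (simp add: Rf_def)

lemma count_rep: "count_list (replicate k x) x = k"
  by (induction k) auto

context hsp
begin

definition QQ :: "nat \<Rightarrow> (real^'n \<Rightarrow> real) \<Rightarrow> (real^'n \<Rightarrow> real) \<Rightarrow> bool" where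
  "QQ m f1 f2 \<longleftrightarrow> CS S f1 \<and> CS S f2 \<and> agr N S Bd m f1 f2"

lemma QQ_add: "QQ m f1 f2 \<Longrightarrow> QQ m g1 g2 \<Longrightarrow> QQ m (\<lambda>y. f1 y + g1 y) (\<lambda>y. f2 y + g2 y)"
  unfolding QQ_def by (auto intro!: CS_add agr_add[OF reg Bd_sub])

lemma QQ_diff: "QQ m f1 f2 \<Longrightarrow> QQ m g1 g2 \<Longrightarrow> QQ m (\<lambda>y. f1 y - g1 y) (\<lambda>y. f2 y - g2 y)"
  unfolding QQ_def by (auto intro!: CS_diff agr_diff[OF reg Bd_sub])

lemma QQ_mult: "QQ m f1 f2 \<Longrightarrow> QQ m g1 g2 \<Longrightarrow> QQ m (\<lambda>y. f1 y * g1 y) (\<lambda>y. f2 y * g2 y)"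
  unfolding QQ_def by (auto intro!: CS_mult agr_mult[OF reg Bd_sub])

lemma QQ_const: "QQ m (\<lambda>y. c) (\<lambda>y. c)"
  unfolding QQ_def by (auto intro!: CS_const agr_refl)

lemma QQ_sum: "finite A \<Longrightarrow> (\<And>a. a \<in> A \<Longrightarrow> QQ m (f1 a) (f2 a)) \<Longrightarrow> QQ m (\<lambda>y. \<Sum>a\<in>A. f1 a y) (\<lambda>y. \<Sum>a\<in>A. f2 a y)"
  unfolding QQ_def by (auto intro!: CS_sum agr_sum[OF reg Bd_sub])

lemma QQ_ifc: "(c \<Longrightarrow> QQ m f1 f2) \<Longrightarrow> (\<not> c \<Longrightarrow> QQ m g1 g2) \<Longrightarrow> QQ m (\<lambda>y. if c then f1 y else g1 y) (\<lambda>y. if c then f2 y else g2 y)"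
  by (cases c) simp_all

lemma QQ_PP: "PP f1 f2 \<Longrightarrow> QQ m f1 f2"
  unfolding QQ_def PP_def by blast

lemma QQ_mono: "QQ m f1 f2 \<Longrightarrow> m' \<le> m \<Longrightarrow> QQ m' f1 f2"
  unfolding QQ_def using agr_mono by blast

lemma QQ_pd_step: "QQ (Suc m) f1 f2 \<Longrightarrow> QQ m (pd k f1) (pd k f2)"
  unfolding QQ_def by (auto intro!: CS_pd agr_pd_gen)

lemma QQ_pdpd:
  assumes "\<not> (i = N \<and> j = N)" "QQ (Suc m) f1 f2"
  shows "QQ m (pd i (pd j f1)) (pd i (pd j f2))"
proof -
  have c: "CS S f1" "CS S f2" and a: "agr N S Bd (Suc m) f1 f2" using assms(2) unfolding QQ_def by auto
  define m1 where "m1 = (if j = N then m else Suc m)"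
  have a1: "agr N S Bd m1 (pd j f1) (pd j f2)" by (rule agr_pd_gen[OF a]) (simp add: m1_def)
  have a2: "agr N S Bd m (pd i (pd j f1)) (pd i (pd j f2))" by (rule agr_pd_gen[OF a1]) (use assms(1) in \<open>auto simp: m1_def\<close>)
  show ?thesis unfolding QQ_def using a2 c by (auto intro!: CS_pd)
qed

lemma QQ_Rf:
  assumes G: "\<And>a b. PP (\<lambda>y. ginv H1 y $ a $ b) (\<lambda>y. ginv H2 y $ a $ b)"
    and C: "\<And>k i j. PP (chr H1 k i j) (chr H2 k i j)"
    and Sc: "PP (scal H1) (scal H2)"
    and f: "QQ (Suc m) f1 f2"
  shows "QQ m (Rf N H1 f1) (Rf N H2 f2)"
proof -
  have f0: "QQ m f1 f2" by (rule QQ_mono[OF f]) simp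
  have fk: "\<And>k. QQ m (pd k f1) (pd k f2)" by (rule QQ_pd_step[OF f])
  have fij: "\<And>i j. \<not> (i = N \<and> j = N) \<Longrightarrow> QQ m (pd i (pd j f1)) (pd i (pd j f2))" by (rule QQ_pdpd[OF _ f])
  have g: "\<And>a b. QQ m (\<lambda>y. ginv H1 y $ a $ b) (\<lambda>y. ginv H2 y $ a $ b)" by (rule QQ_PP[OF G])
  have c: "\<And>k i j. QQ m (chr H1 k i j) (chr H2 k i j)" by (rule QQ_PP[OF C])
  have s: "QQ m (scal H1) (scal H2)" by (rule QQ_PP[OF Sc])
  show ?thesis unfolding Rf_eq
    by (intro QQ_diff QQ_add QQ_mult QQ_const QQ_sum QQ_ifc f0 fk fij g c s finite_UNIV; simp)
qed

lemma F_agree: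
  assumes m1: "riem_metric S H1" and m2: "riem_metric S H2"
    and nf1: "normal_form N S H1" and nf2: "normal_form N S H2"
    and HH: "\<And>a b. PP (\<lambda>y. H1 y $ a $ b) (\<lambda>y. H2 y $ a $ b)"
    and F1: "smooth_upto S F1" and F2: "smooth_upto S F2"
    and eq1: "\<forall>x\<in>S. x $ N > 0 \<longrightarrow> conf_lap H1 F1 x = 0"
    and eq2: "\<forall>x\<in>S. x $ N > 0 \<longrightarrow> conf_lap H2 F2 x = 0"
    and cau: "\<forall>x\<in>S. x $ N = 0 \<longrightarrow> F1 x = F2 x \<and> jc S [N] F1 x = jc S [N] F2 x"
  shows "agr N S Bd m F1 F2"
proof -
  have G: "\<And>a b. PP (\<lambda>y. ginv H1 y $ a $ b) (\<lambda>y. ginv H2 y $ a $ b)" by (rule PP_ginv[OF m1 m2 HH])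
  have C: "\<And>k i j. PP (chr H1 k i j) (chr H2 k i j)" by (rule PP_chr[OF G HH])
  have Sc: "PP (scal H1) (scal H2)" by (rule PP_scal[OF G HH])
  have cF: "CS S F1" "CS S F2" using F1 F2 by (auto intro: su_CS)
  have R1: "pd N (pd N F1) y = Rf N H1 F1 y" if y: "y \<in> interior S" for y
  proof -
    have yS: "y \<in> S" using y interior_subset by blast
    show ?thesis by (rule pde_rearr) (use eq1 yS interior_pos[OF y] ginv_NN[OF m1 nf1 yS] in auto)
  qed
  have R2: "pd N (pd N F2) y = Rf N H2 F2 y" if y: "y \<in> interior S" for y
  proof -
    have yS: "y \<in> S" using y interior_subset by blast
    show ?thesis by (rule pde_rearr) (use eq2 yS interior_pos[OF y] ginv_NN[OF m2 nf2 yS] in auto)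
  qed
  have main: "QQ (Suc m) F1 F2" for m
  proof (induction m)
    case 0
    show ?case unfolding QQ_def Bd_def
    proof (intro conjI cF agr_from_normal[OF S_open reg cF])
      fix k y assume k: "k \<le> Suc 0" and y: "y \<in> S" "y $ N = 0"
      show "jc S (replicate k N) F1 y = jc S (replicate k N) F2 y"
      proof (cases k)
        case 0 then show ?thesis using jc_smooth_nil[OF F1 y(1)] jc_smooth_nil[OF F2 y(1)] cau y by simp
      next
        case (Suc k') then have "k = 1" using k by simp
        then show ?thesis using cau y by simp
      qed
    qed
  next
    case (Suc m)
    have IH: "agr N S Bd (Suc m) F1 F2" using Suc.IH unfolding QQ_def by blast
    have RR: "QQ m (Rf N H1 F1) (Rf N H2 F2)" by (rule QQ_Rf[OF G C Sc Suc.IH])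
    show ?case unfolding QQ_def Bd_def
    proof (intro conjI cF agr_from_normal[OF S_open reg cF])
      fix k y assume k: "k \<le> Suc (Suc m)" and y: "y \<in> S" "y $ N = 0"
      have yB: "y \<in> Bd" using y unfolding Bd_def by simp
      show "jc S (replicate k N) F1 y = jc S (replicate k N) F2 y"
      proof (cases "k = Suc (Suc m)")
        case False
        then have "k \<le> Suc m" using k by simp
        moreover have "count_list (replicate k N) N = k" by (rule count_rep)
        ultimately have "count_list (replicate k N) N \<le> Suc m" by simp
        then show ?thesis by (rule agrD[OF IH yB])
      next
        case True
        have rep: "replicate k N = replicate m N @ [N, N]" using True replicate_add[of m 2 N] by (simp add: numeral_2_eq_2)
        have e1: "jc S (replicate k N) F1 y = jc S (replicate m N) (Rf N H1 F1) y"
          unfolding rep jc_append by (rule jc_local_fun) (use R1 in simp)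
        have e2: "jc S (replicate k N) F2 y = jc S (replicate m N) (Rf N H2 F2) y"
          unfolding rep jc_append by (rule jc_local_fun) (use R2 in simp)
        have aR: "agr N S Bd m (Rf N H1 F1) (Rf N H2 F2)" using RR unfolding QQ_def by blast
        have "count_list (replicate m N) N \<le> m" by (simp add: count_rep)
        then have "jc S (replicate m N) (Rf N H1 F1) y = jc S (replicate m N) (Rf N H2 F2) y"
          by (rule agrD[OF aR yB])
        then show ?thesis using e1 e2 by simp
      qed
    qed
  qed
  have "agr N S Bd (Suc m) F1 F2" using main[of m] unfolding QQ_def by blast
  then show ?thesis by (rule agr_mono) simp
qed

end


context hsp
begin

lemma PP_of_agr: "CS S f1 \<Longrightarrow> CS S f2 \<Longrightarrow> (\<And>m. agr N S Bd m f1 f2) \<Longrightarrow> PP f1 f2"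
  unfolding PP_def by blast

lemma PP_flat:
  assumes "PP f1 f2"
  shows "flat_bdry N S (\<lambda>x. f1 x - f2 x)"
  unfolding flat_bdry_def
proof (intro allI ballI impI)
  fix k x assume x: "x \<in> S" "x $ N = 0"
  have c: "CS S f1" "CS S f2" and a: "agr N S Bd k f1 f2" using assms unfolding PP_def by auto
  have "jc S (replicate k N) f1 x = jc S (replicate k N) f2 x"
    by (rule agrD[OF a]) (use x in \<open>auto simp: Bd_def count_rep\<close>)
  then show "jc S (replicate k N) (\<lambda>x. f1 x - f2 x) x = 0"
    using jc_diff[OF reg x(1) c] by simp
qed

lemma part1:
  assumes m1: "riem_metric S H1" and m2: "riem_metric S H2"
    and nf1: "normal_form N S H1" and nf2: "normal_form N S H2"
    and H_agree: "\<forall>i j. flat_bdry N S (\<lambda>x. H1 x $ i $ j - H2 x $ i $ j)"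
    and F1_smooth: "\<forall>l. smooth_upto S (F1 l)" and F2_smooth: "\<forall>l. smooth_upto S (F2 l)"
    and G1_smooth: "smooth_upto S G1" and G2_smooth: "smooth_upto S G2"
    and F1_eq: "\<forall>l. \<forall>x\<in>S. x $ N > 0 \<longrightarrow> conf_lap H1 (F1 l) x = 0"
    and F2_eq: "\<forall>l. \<forall>x\<in>S. x $ N > 0 \<longrightarrow> conf_lap H2 (F2 l) x = 0"
    and G1_eq: "\<forall>x\<in>S. x $ N > 0 \<longrightarrow> conf_lap H1 G1 x = 0"
    and G2_eq: "\<forall>x\<in>S. x $ N > 0 \<longrightarrow> conf_lap H2 G2 x = 0"
    and F_cauchy: "\<forall>l. \<forall>x\<in>S. x $ N = 0 \<longrightarrow>
                     F1 l x = F2 l x \<and> jc S [N] (F1 l) x = jc S [N] (F2 l) x"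
    and G_cauchy: "\<forall>x\<in>S. x $ N = 0 \<longrightarrow> G1 x = G2 x \<and> jc S [N] G1 x = jc S [N] G2 x"
    and G1_nz: "\<forall>x\<in>S. G1 x \<noteq> 0" and G2_nz: "\<forall>x\<in>S. G2 x \<noteq> 0"
  shows "PP (\<lambda>x. F1 l x / G1 x) (\<lambda>x. F2 l x / G2 x)"
proof -
  have HH: "\<And>a b. PP (\<lambda>y. H1 y $ a $ b) (\<lambda>y. H2 y $ a $ b)"
    using PP_H[OF m1 m2] H_agree by blast
  have PF: "PP (F1 l) (F2 l)"
    by (rule PP_of_agr) (use F1_smooth F2_smooth su_CS in blast, use F1_smooth F2_smooth su_CS in blast,
        rule F_agree[OF m1 m2 nf1 nf2 HH], use F1_smooth F2_smooth F1_eq F2_eq F_cauchy in auto)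
  have PG: "PP G1 G2"
    by (rule PP_of_agr) (use G1_smooth G2_smooth su_CS in blast, use G1_smooth G2_smooth su_CS in blast,
        rule F_agree[OF m1 m2 nf1 nf2 HH], use G1_smooth G2_smooth G1_eq G2_eq G_cauchy in auto)
  show ?thesis
    by (rule PP_div[OF PF PG]) (use nzb_smooth G1_smooth G2_smooth G1_nz G2_nz in auto)
qed

end


lemma mvt_sym:
  fixes g :: "real \<Rightarrow> real"
  assumes "\<And>t. min a b \<le> t \<Longrightarrow> t \<le> max a b \<Longrightarrow> DERIV g t :> g' t"
  shows "\<exists>\<theta>. min a b \<le> \<theta> \<and> \<theta> \<le> max a b \<and> g b - g a = (b - a) * g' \<theta>"
proof (cases a b rule: linorder_cases)
  case less
  then obtain z where "a < z" "z < b" "g b - g a = (b - a) * g' z"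
    using MVT2[OF less, of g g'] assms by auto
  then show ?thesis using less by (intro exI[of _ z]) auto
next
  case equal then show ?thesis by (intro exI[of _ a]) auto
next
  case greater
  then obtain z where "b < z" "z < a" "g a - g b = (a - b) * g' z"
    using MVT2[OF greater, of g g'] assms by auto
  then show ?thesis using greater by (intro exI[of _ z]) (auto simp: algebra_simps)
qed

definition Pk :: "'n set \<Rightarrow> real^'n \<Rightarrow> real^'n" where
  "Pk K v = (\<chi> i. if i \<in> K then v $ i else 0)"

lemma Pk_norm: "norm (Pk K v) \<le> norm v"
  unfolding Pk_def by (rule norm_le_componentwise_cart) auto

lemma Pk_insert: "Pk (insert k K) v = Pk K v + (v $ k) *\<^sub>R axis k 1"
  if "k \<notin> K" for k :: "'n::finite"
  using that unfolding Pk_def by (auto simp: vec_eq_iff axis_def)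

lemma frechet_aux:
  fixes f :: "real^'n::finite \<Rightarrow> real"
  assumes U: "open U" "x \<in> U"
    and l: "\<And>y k. y \<in> U \<Longrightarrow> lined f y k" and c: "\<And>k. isCont (pd k f) x"
  shows "finite K \<Longrightarrow> \<forall>\<epsilon>>0. \<exists>\<delta>>0. \<forall>v. norm v < \<delta> \<longrightarrow>
      \<bar>f (x + Pk K v) - f x - (\<Sum>k\<in>K. v $ k * pd k f x)\<bar> \<le> \<epsilon> * norm v"
proof (induction K rule: finite_induct)
  case empty
  have z: "Pk {} v = 0" for v :: "real^'n" by (simp add: Pk_def vec_eq_iff)
  show ?case by (auto simp: z intro!: exI[of _ 1])
next
  case (insert k K)
  show ?case
  proof (intro allI impI)
    fix \<epsilon> :: real assume \<epsilon>: "\<epsilon> > 0"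
    have e2: "\<epsilon>/2 > 0" using \<epsilon> by simp
    obtain \<delta>1 where \<delta>1: "\<delta>1 > 0" "\<And>v. norm v < \<delta>1 \<Longrightarrow> \<bar>f (x + Pk K v) - f x - (\<Sum>k\<in>K. v $ k * pd k f x)\<bar> \<le> (\<epsilon>/2) * norm v"
      using insert.IH e2 by blast
    obtain \<delta>2 where \<delta>2: "\<delta>2 > 0" "\<And>y. dist y x < \<delta>2 \<Longrightarrow> dist (pd k f y) (pd k f x) < \<epsilon>/2"
      using c[of k] e2 unfolding continuous_at_eps_delta by blast
    obtain r where r: "r > 0" "ball x r \<subseteq> U" using U openE by blast
    define \<delta> where "\<delta> = min \<delta>1 (min (\<delta>2/2) (r/2))"
    have \<delta>: "\<delta> > 0" "\<delta> \<le> \<delta>1" "2 * \<delta> \<le> \<delta>2" "2 * \<delta> \<le> r" using \<delta>1 \<delta>2 r unfolding \<delta>_def by auto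
    show "\<exists>\<delta>>0. \<forall>v. norm v < \<delta> \<longrightarrow> \<bar>f (x + Pk (insert k K) v) - f x - (\<Sum>k\<in>insert k K. v $ k * pd k f x)\<bar> \<le> \<epsilon> * norm v"
    proof (intro exI[of _ \<delta>] conjI allI impI \<delta>(1))
      fix v :: "real^'n" assume v: "norm v < \<delta>"
      define w where "w = x + Pk K v"
      have near: "dist (w + t *\<^sub>R axis k 1) x < min \<delta>2 r" if "\<bar>t\<bar> \<le> \<bar>v $ k\<bar>" for t
      proof -
        have "dist (w + t *\<^sub>R axis k 1) x = norm (Pk K v + t *\<^sub>R axis k 1)" unfolding w_def by (simp add: dist_norm)
        also have "\<dots> \<le> norm (Pk K v) + norm (t *\<^sub>R axis k (1::real))" by (rule norm_triangle_ineq)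
        also have "\<dots> \<le> norm v + \<bar>v $ k\<bar>" using Pk_norm[of K v] that by simp
        also have "\<dots> \<le> 2 * norm v" using component_le_norm_cart[of v k] by simp
        also have "\<dots> < min \<delta>2 r" using v \<delta> by simp
        finally show ?thesis .
      qed
      have der: "DERIV (\<lambda>t. f (w + t *\<^sub>R axis k 1)) t :> pd k f (w + t *\<^sub>R axis k 1)"
        if "min 0 (v $ k) \<le> t" "t \<le> max 0 (v $ k)" for t
      proof (rule line_DERIV_at, rule l)
        have "\<bar>t\<bar> \<le> \<bar>v $ k\<bar>" using that by auto
        then have "dist (w + t *\<^sub>R axis k 1) x < min \<delta>2 r" by (rule near)
        then have "dist (w + t *\<^sub>R axis k 1) x < r" by simp
        then show "w + t *\<^sub>R axis k 1 \<in> U" using r(2) by (auto simp: dist_commute)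
      qed
      obtain \<theta> where \<theta>: "min 0 (v $ k) \<le> \<theta>" "\<theta> \<le> max 0 (v $ k)"
        "f (w + (v $ k) *\<^sub>R axis k 1) - f (w + 0 *\<^sub>R axis k 1) = (v $ k - 0) * pd k f (w + \<theta> *\<^sub>R axis k 1)"
      proof -
        have "\<exists>\<theta>. min 0 (v $ k) \<le> \<theta> \<and> \<theta> \<le> max 0 (v $ k) \<and>
          f (w + (v $ k) *\<^sub>R axis k 1) - f (w + 0 *\<^sub>R axis k 1) = (v $ k - 0) * pd k f (w + \<theta> *\<^sub>R axis k 1)"
          by (rule mvt_sym[of 0 "v $ k" "\<lambda>t. f (w + t *\<^sub>R axis k 1)" "\<lambda>t. pd k f (w + t *\<^sub>R axis k 1)"]) (rule der)
        then show ?thesis using that by blast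
      qed
      have "\<bar>\<theta>\<bar> \<le> \<bar>v $ k\<bar>" using \<theta>(1,2) by auto
      then have "dist (w + \<theta> *\<^sub>R axis k 1) x < min \<delta>2 r" by (rule near)
      then have "dist (w + \<theta> *\<^sub>R axis k 1) x < \<delta>2" by simp
      then have pdc: "\<bar>pd k f (w + \<theta> *\<^sub>R axis k 1) - pd k f x\<bar> < \<epsilon>/2" using \<delta>2(2) by (simp add: dist_real_def)
      have e2: "\<bar>f (w + (v $ k) *\<^sub>R axis k 1) - f w - v $ k * pd k f x\<bar> \<le> (\<epsilon>/2) * norm v"
      proof -
        have "\<bar>f (w + (v $ k) *\<^sub>R axis k 1) - f w - v $ k * pd k f x\<bar> = \<bar>v $ k\<bar> * \<bar>pd k f (w + \<theta> *\<^sub>R axis k 1) - pd k f x\<bar>"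
        proof -
          have "f (w + (v $ k) *\<^sub>R axis k 1) - f w - v $ k * pd k f x = v $ k * (pd k f (w + \<theta> *\<^sub>R axis k 1) - pd k f x)"
            using \<theta>(3) by (simp add: algebra_simps)
          then show ?thesis by (simp only: abs_mult)
        qed
        also have "\<dots> \<le> norm v * (\<epsilon>/2)"
          using component_le_norm_cart[of v k] pdc by (intro mult_mono) auto
        finally show ?thesis by (simp add: mult.commute)
      qed
      have e1: "\<bar>f w - f x - (\<Sum>k\<in>K. v $ k * pd k f x)\<bar> \<le> (\<epsilon>/2) * norm v"
        unfolding w_def using \<delta>1(2)[of v] v \<delta> by simp
      have "f (x + Pk (insert k K) v) = f (w + (v $ k) *\<^sub>R axis k 1)"
        unfolding w_def Pk_insert[OF insert(2)] by (simp add: add.assoc)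
      moreover have "(\<Sum>k\<in>insert k K. v $ k * pd k f x) = v $ k * pd k f x + (\<Sum>k\<in>K. v $ k * pd k f x)"
        using insert(1,2) by simp
      ultimately show "\<bar>f (x + Pk (insert k K) v) - f x - (\<Sum>k\<in>insert k K. v $ k * pd k f x)\<bar> \<le> \<epsilon> * norm v"
        using e1 e2 by linarith
    qed
  qed
qed

lemma frechet_partials:
  fixes f :: "real^'n::finite \<Rightarrow> real"
  assumes U: "open U" "x \<in> U"
    and l: "\<And>y k. y \<in> U \<Longrightarrow> lined f y k" and c: "\<And>k. isCont (pd k f) x"
  shows "(f has_derivative (\<lambda>v. \<Sum>k\<in>UNIV. v $ k * pd k f x)) (at x)"
  unfolding has_derivative_at'
proof (intro conjI allI impI)
  show "bounded_linear (\<lambda>v. \<Sum>k\<in>UNIV. v $ k * pd k f x)"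
    by (intro bounded_linear_sum bounded_linear_compose[OF bounded_linear_mult_left bounded_linear_vec_nth])
  fix e :: real assume e: "e > 0"
  obtain d where d: "d > 0" "\<And>v. norm v < d \<Longrightarrow> \<bar>f (x + Pk UNIV v) - f x - (\<Sum>k\<in>UNIV. v $ k * pd k f x)\<bar> \<le> (e/2) * norm v"
  proof -
    have A: "\<forall>\<epsilon>>0. \<exists>\<delta>>0. \<forall>v. norm v < \<delta> \<longrightarrow>
      \<bar>f (x + Pk UNIV v) - f x - (\<Sum>k\<in>UNIV. v $ k * pd k f x)\<bar> \<le> \<epsilon> * norm v"
      by (rule frechet_aux[OF U]) (use l c in auto)
    have "e/2 > 0" using e by simp
    then show ?thesis using A that by blast
  qed
  show "\<exists>d>0. \<forall>x'. 0 < norm (x' - x) \<and> norm (x' - x) < d \<longrightarrow>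
        norm (f x' - f x - (\<Sum>k\<in>UNIV. (x' - x) $ k * pd k f x)) / norm (x' - x) < e"
  proof (intro exI[of _ d] conjI allI impI d(1))
    fix x' :: "real^'n" assume h: "0 < norm (x' - x) \<and> norm (x' - x) < d"
    have P: "Pk UNIV (x' - x) = x' - x" unfolding Pk_def by (simp add: vec_eq_iff)
    have "\<bar>f x' - f x - (\<Sum>k\<in>UNIV. (x' - x) $ k * pd k f x)\<bar> \<le> (e/2) * norm (x' - x)"
      using d(2)[of "x' - x"] h P by simp
    also have "\<dots> < e * norm (x' - x)" using h e by simp
    finally show "norm (f x' - f x - (\<Sum>k\<in>UNIV. (x' - x) $ k * pd k f x)) / norm (x' - x) < e"
      using h by (simp add: divide_less_eq)
  qed
qed

lemma frechet_CS:
  assumes "CS S f" "x \<in> interior S"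
  shows "(f has_derivative (\<lambda>v. \<Sum>k\<in>UNIV. v $ k * pd k f x)) (at x)"
proof (rule frechet_partials[OF open_interior assms(2)])
  show "lined f y k" if "y \<in> interior S" for y k using goodD(1)[OF CS_good[OF assms(1)] that] .
  show "isCont (pd k f) x" for k
    using goodD(2)[OF CS_good[OF CS_pd[OF assms(1)]]] assms(2)
    by (simp add: continuous_on_eq_continuous_at)
qed

lemma vec_hvd:
  fixes \<gamma> :: "real \<Rightarrow> real^'n::finite"
  assumes "\<And>i. ((\<lambda>t. \<gamma> t $ i) has_vector_derivative d $ i) (at t0)"
  shows "(\<gamma> has_vector_derivative d) (at t0)"
  unfolding has_vector_derivative_def
proof (subst has_derivative_componentwise_within, intro ballI)
  fix b :: "real^'n" assume b: "b \<in> Basis"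
  then obtain i where i: "b = axis i 1" unfolding Basis_vec_def by auto
  have "((\<lambda>t. \<gamma> t $ i) has_derivative (\<lambda>t. t *\<^sub>R d $ i)) (at t0 within UNIV)"
    using assms[of i] unfolding has_vector_derivative_def by simp
  then show "((\<lambda>x. \<gamma> x \<bullet> b) has_derivative (\<lambda>x. x *\<^sub>R d \<bullet> b)) (at t0 within UNIV)"
    unfolding i by (simp add: inner_axis)
qed

lemma chain_pd:
  fixes \<phi> :: "real^'n::finite \<Rightarrow> real^'n" and u :: "real^'n \<Rightarrow> real"
  assumes l: "\<And>k. lined (\<lambda>y. \<phi> y $ k) y0 a"
    and du: "(u has_derivative (\<lambda>v. \<Sum>k\<in>UNIV. v $ k * c k)) (at (\<phi> y0))"
  shows "lined (\<lambda>y. u (\<phi> y)) y0 a" "pd a (\<lambda>y. u (\<phi> y)) y0 = (\<Sum>k\<in>UNIV. pd a (\<lambda>y. \<phi> y $ k) y0 * c k)"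
proof -
  define d where "d = (\<chi> k. pd a (\<lambda>y. \<phi> y $ k) y0)"
  have g: "((\<lambda>t. \<phi> (y0 + t *\<^sub>R axis a 1)) has_vector_derivative d) (at 0)"
    by (rule vec_hvd) (use lined_hvd[OF l] in \<open>simp add: d_def\<close>)
  have du': "(u has_derivative (\<lambda>v. \<Sum>k\<in>UNIV. v $ k * c k)) (at ((\<lambda>t. \<phi> (y0 + t *\<^sub>R axis a 1)) 0))"
    using du by simp
  have "((\<lambda>t. u (\<phi> (y0 + t *\<^sub>R axis a 1))) has_derivative (\<lambda>t. \<Sum>k\<in>UNIV. (t *\<^sub>R d) $ k * c k)) (at 0)"
    using has_derivative_compose[OF g[unfolded has_vector_derivative_def] du'] by simp
  moreover have "(\<lambda>t. \<Sum>k\<in>UNIV. (t *\<^sub>R d) $ k * c k) = (\<lambda>t. t *\<^sub>R (\<Sum>k\<in>UNIV. d $ k * c k))"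
    by (rule ext) (simp add: sum_distrib_left mult.assoc)
  ultimately have h: "((\<lambda>t. u (\<phi> (y0 + t *\<^sub>R axis a 1))) has_vector_derivative (\<Sum>k\<in>UNIV. d $ k * c k)) (at 0)"
    unfolding has_vector_derivative_def by simp
  show "lined (\<lambda>y. u (\<phi> y)) y0 a" using linedI[OF h] .
  show "pd a (\<lambda>y. u (\<phi> y)) y0 = (\<Sum>k\<in>UNIV. pd a (\<lambda>y. \<phi> y $ k) y0 * c k)"
    using pd_eqI[OF h] by (simp add: d_def)
qed


lemma jc_interior:
  assumes "S \<subseteq> closure (interior S)" "x \<in> interior S" "good S (ipd is f)"
  shows "jc S is f x = ipd is f x"
proof (rule jc_eqI[OF assms(1)])
  show "x \<in> S" using assms(2) interior_subset by blast
  show "(ipd is f \<longlongrightarrow> ipd is f x) (at x within interior S)"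
    using goodD(2)[OF assms(3)] assms(2) unfolding continuous_on_def by blast
qed

lemma pd_coord: "pd a (\<lambda>y. y $ l) y = (if a = l then 1 else 0)" "lined (\<lambda>y. y $ l) y a"
proof -
  have h: "((\<lambda>t. (y + t *\<^sub>R axis a 1) $ l) has_vector_derivative (if a = l then 1 else 0)) (at 0)"
  proof -
    have e: "(\<lambda>t. (y + t *\<^sub>R axis a 1) $ l) = (\<lambda>t. y $ l + t * (if a = l then 1 else 0))"
      by (rule ext) (simp add: axis_def)
    show ?thesis unfolding e has_real_derivative_iff_has_vector_derivative[symmetric]
      by (auto intro!: derivative_eq_intros)
  qed
  show "pd a (\<lambda>y. y $ l) y = (if a = l then 1 else 0)" by (rule pd_eqI[OF h])
  show "lined (\<lambda>y. y $ l) y a" by (rule linedI[OF h])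
qed

lemma matrix_inv_unique:
  fixes A B :: "real^'n^'n"
  assumes "A ** B = mat 1"
  shows "matrix_inv A = B"
proof -
  have inv: "invertible A" using assms invertible_right_inverse by blast
  have "matrix_inv A = matrix_inv A ** (A ** B)" using assms by simp
  also have "\<dots> = (matrix_inv A ** A) ** B" by (rule matrix_mul_assoc)
  also have "\<dots> = B" using invertible_matrix_inv(2)[OF inv] by simp
  finally show ?thesis .
qed

primrec Dl :: "(real^'n \<Rightarrow> real^'n^'n) \<Rightarrow> 'n list \<Rightarrow> (real^'n \<Rightarrow> real) \<Rightarrow> real^'n \<Rightarrow> real" where
  "Dl M [] u = u"
| "Dl M (a # is) u = (\<lambda>x. \<Sum>k\<in>UNIV. pd k (Dl M is u) x * M x $ k $ a)"

definition Wm :: "(real^'n \<Rightarrow> real^'n^'n) \<Rightarrow> (real^'n \<Rightarrow> real^'n^'n) \<Rightarrow> 'n \<Rightarrow> 'n \<Rightarrow> real^'n \<Rightarrow> real" where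
  "Wm M H a b x = (\<Sum>i\<in>UNIV. \<Sum>j\<in>UNIV. M x $ i $ a * M x $ j $ b * H x $ i $ j)"

locale csys = hsp N S for N :: "'n::finite" and S +
  fixes Z :: "real^'n \<Rightarrow> real^'n"
  assumes cs: "coord_system S Z"
begin

definition T where "T = Z ` S"
definition phi where "phi = inv_into S Z"
definition J where "J x = (\<chi> l k. jc S [k] (\<lambda>x. Z x $ l) x)"
definition M where "M x = matrix_inv (J x)"

lemma Zc: "smooth_upto S (\<lambda>x. Z x $ l)" using cs unfolding coord_system_def by blast
lemma phic: "smooth_upto T (\<lambda>y. phi y $ l)" using cs unfolding coord_system_def T_def phi_def by blast
lemma injZ: "inj_on Z S" using cs unfolding coord_system_def by blast
lemma phiZ: "x \<in> S \<Longrightarrow> phi (Z x) = x" unfolding phi_def using injZ by simp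
lemma Zphi: "y \<in> T \<Longrightarrow> Z (phi y) = y" unfolding phi_def T_def by (rule f_inv_into_f)
lemma phiS: "y \<in> T \<Longrightarrow> phi y \<in> S" unfolding phi_def T_def by (rule inv_into_into)
lemma regT: "T \<subseteq> closure (interior T)" using su_reg[OF phic] .
lemma ZT: "x \<in> S \<Longrightarrow> Z x \<in> T" unfolding T_def by simp

lemma contZ: "continuous_on (interior S) Z"
proof -
  have "continuous_on (interior S) (\<lambda>x. \<chi> l. Z x $ l)"
    by (intro continuous_on_vec_lambda goodD(2)[OF CS_good[OF su_CS[OF Zc]]])
  then show ?thesis by simp
qed

lemma contphi: "continuous_on (interior T) phi"
proof -
  have "continuous_on (interior T) (\<lambda>y. \<chi> l. phi y $ l)"
    by (intro continuous_on_vec_lambda goodD(2)[OF CS_good[OF su_CS[OF phic]]])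
  then show ?thesis by simp
qed

lemma ZintS: "x \<in> interior S \<Longrightarrow> Z x \<in> interior T"
proof -
  have "open (Z ` interior S)"
    by (rule invariance_of_domain[OF contZ open_interior]) (rule inj_on_subset[OF injZ interior_subset])
  moreover have "Z ` interior S \<subseteq> T" unfolding T_def using interior_subset by blast
  ultimately have "Z ` interior S \<subseteq> interior T" by (rule interior_maximal[rotated])
  then show "x \<in> interior S \<Longrightarrow> Z x \<in> interior T" by blast
qed

lemma phiint: "y \<in> interior T \<Longrightarrow> phi y \<in> interior S"
proof -
  have inj: "inj_on phi T" unfolding phi_def T_def by (rule inj_on_inv_into) simp
  have "open (phi ` interior T)"
    by (rule invariance_of_domain[OF contphi open_interior]) (rule inj_on_subset[OF inj interior_subset])
  moreover have "phi ` interior T \<subseteq> S" using phiS interior_subset by blast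
  ultimately have "phi ` interior T \<subseteq> interior S" by (rule interior_maximal[rotated])
  then show "y \<in> interior T \<Longrightarrow> phi y \<in> interior S" by blast
qed

lemma J_int: "x \<in> interior S \<Longrightarrow> J x $ l $ k = pd k (\<lambda>x. Z x $ l) x"
proof -
  assume x: "x \<in> interior S"
  have g: "good S (ipd [k] (\<lambda>x. Z x $ l))" by (rule CS_good[OF CS_ipd[OF su_CS[OF Zc]]])
  show ?thesis unfolding J_def using jc_interior[OF reg x g] by simp
qed

lemma filt: "x \<in> S \<Longrightarrow> filterlim phi (at x within interior S) (at (Z x) within interior T)"
  unfolding filterlim_at
proof (intro conjI)
  assume x: "x \<in> S"
  show "eventually (\<lambda>y. phi y \<in> interior S \<and> phi y \<noteq> x) (at (Z x) within interior T)"
    unfolding eventually_at_filter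
  proof (rule always_eventually, intro allI impI)
    fix y assume "y \<noteq> Z x" "y \<in> interior T"
    moreover have yT: "y \<in> T" using \<open>y \<in> interior T\<close> interior_subset by blast
    ultimately show "phi y \<in> interior S \<and> phi y \<noteq> x"
      using phiint Zphi[OF yT] by auto
  qed
  have "((\<lambda>y. \<chi> l. phi y $ l) \<longlongrightarrow> (\<chi> l. phi (Z x) $ l)) (at (Z x) within interior T)"
    by (intro tendsto_vec_lambda su_tendsto[OF phic ZT[OF x]])
  then show "(phi \<longlongrightarrow> x) (at (Z x) within interior T)" using phiZ[OF x] by simp
qed

lemma notbotT: "x \<in> S \<Longrightarrow> at (Z x) within interior T \<noteq> bot"
  using regT ZT by (intro notbot_within_open) auto

lemma JD_int:
  assumes y: "y \<in> interior T"
  shows "(\<Sum>k\<in>UNIV. J (phi y) $ l $ k * pd a (\<lambda>y. phi y $ k) y) = (if l = a then 1 else 0)"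
proof -
  have py: "phi y \<in> interior S" using phiint[OF y] .
  have lin: "\<And>k. lined (\<lambda>y. phi y $ k) y a" using goodD(1)[OF CS_good[OF su_CS[OF phic]] y] .
  have fr: "((\<lambda>x. Z x $ l) has_derivative (\<lambda>v. \<Sum>k\<in>UNIV. v $ k * pd k (\<lambda>x. Z x $ l) (phi y))) (at (phi y))"
    by (rule frechet_CS[OF su_CS[OF Zc] py])
  have "pd a (\<lambda>y. Z (phi y) $ l) y = (\<Sum>k\<in>UNIV. pd a (\<lambda>y. phi y $ k) y * pd k (\<lambda>x. Z x $ l) (phi y))"
    by (rule chain_pd(2)[OF lin fr])
  moreover have "pd a (\<lambda>y. Z (phi y) $ l) y = pd a (\<lambda>y. y $ l) y"
  proof (rule pd_local[OF open_interior y])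
    fix w assume "w \<in> interior T"
    then have "w \<in> T" using interior_subset by blast
    then show "Z (phi w) $ l = w $ l" using Zphi by simp
  qed
  ultimately show ?thesis using J_int[OF py] pd_coord(1)[of a l y] by (simp add: mult.commute eq_commute)
qed

lemma detJ: "x \<in> S \<Longrightarrow> det (J x) \<noteq> 0"
proof -
  assume x: "x \<in> S"
  define D0 where "D0 = (\<chi> k a. jc T [a] (\<lambda>y. phi y $ k) (Z x))"
  have tJ: "((\<lambda>y. J (phi y) $ l $ k) \<longlongrightarrow> J x $ l $ k) (at (Z x) within interior T)" for l k
  proof -
    have t: "(pd k (\<lambda>x. Z x $ l) \<longlongrightarrow> J x $ l $ k) (at x within interior S)"
    proof -
      have g: "good S (ipd [k] (\<lambda>x. Z x $ l))" by (rule CS_good[OF CS_ipd[OF su_CS[OF Zc]]])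
      show ?thesis unfolding J_def using jc_tendsto[OF reg x g] by simp
    qed
    have "((\<lambda>y. pd k (\<lambda>x. Z x $ l) (phi y)) \<longlongrightarrow> J x $ l $ k) (at (Z x) within interior T)"
      by (rule filterlim_compose[OF t filt[OF x]])
    then show ?thesis
      by (rule Lim_cong_within[THEN iffD1, rotated -1]) (use J_int phiint in auto)
  qed
  have tD: "((\<lambda>y. pd a (\<lambda>y. phi y $ k) y) \<longlongrightarrow> D0 $ k $ a) (at (Z x) within interior T)" for k a
  proof -
    have g: "good T (ipd [a] (\<lambda>y. phi y $ k))" by (rule CS_good[OF CS_ipd[OF su_CS[OF phic]]])
    show ?thesis unfolding D0_def using jc_tendsto[OF regT ZT[OF x] g] by simp
  qed
  have "(J x ** D0) $ l $ a = mat 1 $ l $ a" for l a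
  proof -
    have t1: "((\<lambda>y. \<Sum>k\<in>UNIV. J (phi y) $ l $ k * pd a (\<lambda>y. phi y $ k) y) \<longlongrightarrow> (\<Sum>k\<in>UNIV. J x $ l $ k * D0 $ k $ a)) (at (Z x) within interior T)"
      by (intro tendsto_sum tendsto_mult tJ tD)
    have t2: "((\<lambda>y. \<Sum>k\<in>UNIV. J (phi y) $ l $ k * pd a (\<lambda>y. phi y $ k) y) \<longlongrightarrow> (if l = a then 1 else 0)) (at (Z x) within interior T)"
      by (rule Lim_cong_within[THEN iffD1, rotated -1, OF tendsto_const]) (use JD_int in auto)
    have "(\<Sum>k\<in>UNIV. J x $ l $ k * D0 $ k $ a) = (if l = a then 1 else 0)"
      by (rule tendsto_unique[OF notbotT[OF x] t1 t2])
    then show ?thesis by (simp add: matrix_matrix_mult_def mat_def)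
  qed
  then have "J x ** D0 = mat 1" by (simp add: vec_eq_iff)
  then have "det (J x) * det D0 = 1" using det_mul[of "J x" D0] by simp
  then show "det (J x) \<noteq> 0" by auto
qed

lemma Dphi_M: "y \<in> interior T \<Longrightarrow> pd a (\<lambda>y. phi y $ k) y = M (phi y) $ k $ a"
proof -
  assume y: "y \<in> interior T"
  have "J (phi y) ** (\<chi> k a. pd a (\<lambda>y. phi y $ k) y) = mat 1"
    using JD_int[OF y] by (simp add: vec_eq_iff matrix_matrix_mult_def mat_def)
  then have "M (phi y) = (\<chi> k a. pd a (\<lambda>y. phi y $ k) y)" unfolding M_def by (rule matrix_inv_unique)
  then show ?thesis by simp
qed

end


definition MkJ :: "(real^'n \<Rightarrow> real^'n^'n) \<Rightarrow> 'n \<Rightarrow> 'n \<Rightarrow> real^'n \<Rightarrow> real^'n^'n" where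
  "MkJ J k a x = (\<chi> i j. if j = k then (if i = a then 1 else 0) else J x $ i $ j)"

lemma Wm_eq: "Wm M H a b = (\<lambda>x. \<Sum>i\<in>UNIV. \<Sum>j\<in>UNIV. M x $ i $ a * M x $ j $ b * H x $ i $ j)"
  by (rule ext) (simp add: Wm_def)

context csys
begin

lemma CS_J: "CS S (\<lambda>x. J x $ l $ k)"
  by (rule CS_local[of S "pd k (\<lambda>x. Z x $ l)"]) (use J_int CS_pd[OF su_CS[OF Zc]] in auto)

lemma nzb_detJ: "nzb S (\<lambda>x. det (J x))"
  unfolding nzb_def
proof (intro conjI ballI)
  show "det (J x) \<noteq> 0" if "x \<in> interior S" for x using detJ that interior_subset by blast
  show "\<exists>L. ((\<lambda>x. det (J x)) \<longlongrightarrow> L) (at x within interior S) \<and> L \<noteq> 0" if x: "x \<in> S" for x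
  proof -
    have "((\<lambda>w. J w $ l $ k) \<longlongrightarrow> J x $ l $ k) (at x within interior S)" for l k
    proof -
      have g: "good S (ipd [k] (\<lambda>x. Z x $ l))" by (rule CS_good[OF CS_ipd[OF su_CS[OF Zc]]])
      have "(pd k (\<lambda>x. Z x $ l) \<longlongrightarrow> J x $ l $ k) (at x within interior S)"
        unfolding J_def using jc_tendsto[OF reg x g] by simp
      then show ?thesis
        by (rule Lim_cong_within[THEN iffD1, rotated -1]) (use J_int in auto)
    qed
    then have "((\<lambda>w. det (J w)) \<longlongrightarrow> det (J x)) (at x within interior S)" by (rule det_tendsto)
    then show ?thesis using detJ[OF x] by blast
  qed
qed

lemma M_cramer: "x \<in> S \<Longrightarrow> M x $ k $ a = det (MkJ J k a x) / det (J x)"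
  unfolding M_def MkJ_def by (rule matrix_inv_cramer[OF detJ])

lemma CS_M: "CS S (\<lambda>x. M x $ k $ a)"
proof (rule CS_local[of S "\<lambda>x. det (MkJ J k a x) / det (J x)"])
  show "det (MkJ J k a y) / det (J y) = M y $ k $ a" if "y \<in> interior S" for y
    using M_cramer[of y k a] that interior_subset[of S] by auto
  show "CS S (\<lambda>x. det (MkJ J k a x) / det (J x))"
  proof (rule CS_div)
    show "CS S (\<lambda>x. det (MkJ J k a x))"
    proof (rule CS_det)
      fix i j show "CS S (\<lambda>y. MkJ J k a y $ i $ j)"
        unfolding MkJ_def vec_lambda_beta by (cases "j = k") (simp_all add: CS_const CS_J)
    qed
    show "CS S (\<lambda>x. det (J x))" by (rule CS_det) (rule CS_J)
    show "nzb S (\<lambda>x. det (J x))" by (rule nzb_detJ)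
  qed
qed

lemma CS_Dl: "CS S u \<Longrightarrow> CS S (Dl M is u)"
proof (induction "is")
  case Nil then show ?case by simp
next
  case (Cons a "is")
  show ?case unfolding Dl.simps
    by (intro CS_sum CS_mult CS_pd CS_M Cons.IH[OF Cons.prems] finite_UNIV) simp_all
qed

lemma chain_u:
  assumes u: "CS S u" and y: "y \<in> interior T"
  shows "lined (\<lambda>y. u (phi y)) y a" "pd a (\<lambda>y. u (phi y)) y = (\<Sum>k\<in>UNIV. pd k u (phi y) * M (phi y) $ k $ a)"
proof -
  have py: "phi y \<in> interior S" using phiint[OF y] .
  have lin: "\<And>k. lined (\<lambda>y. phi y $ k) y a" using goodD(1)[OF CS_good[OF su_CS[OF phic]] y] .
  have fr: "(u has_derivative (\<lambda>v. \<Sum>k\<in>UNIV. v $ k * pd k u (phi y))) (at (phi y))"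
    by (rule frechet_CS[OF u py])
  show "lined (\<lambda>y. u (phi y)) y a" by (rule chain_pd(1)[OF lin fr])
  have "pd a (\<lambda>y. u (phi y)) y = (\<Sum>k\<in>UNIV. pd a (\<lambda>y. phi y $ k) y * pd k u (phi y))"
    by (rule chain_pd(2)[OF lin fr])
  then show "pd a (\<lambda>y. u (phi y)) y = (\<Sum>k\<in>UNIV. pd k u (phi y) * M (phi y) $ k $ a)"
    using Dphi_M[OF y] by (simp add: mult.commute)
qed

lemma ipd_comp: "CS S u \<Longrightarrow> y \<in> interior T \<Longrightarrow> ipd is (\<lambda>y. u (phi y)) y = Dl M is u (phi y)"
proof (induction "is" arbitrary: y)
  case Nil then show ?case by simp
next
  case (Cons a "is")
  have "ipd (a # is) (\<lambda>y. u (phi y)) y = pd a (ipd is (\<lambda>y. u (phi y))) y" by simp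
  also have "\<dots> = pd a (\<lambda>y. Dl M is u (phi y)) y"
    by (rule pd_local[OF open_interior Cons.prems(2)]) (rule Cons.IH[OF Cons.prems(1)])
  also have "\<dots> = (\<Sum>k\<in>UNIV. pd k (Dl M is u) (phi y) * M (phi y) $ k $ a)"
    by (rule chain_u(2)[OF CS_Dl[OF Cons.prems(1)] Cons.prems(2)])
  finally show ?case by simp
qed

lemma jc_comp:
  assumes u: "CS S u" and x: "x \<in> S"
  shows "jc T is (\<lambda>y. u (phi y)) (Z x) = jc S [] (Dl M is u) x"
proof (rule jc_eqI[OF regT ZT[OF x]])
  have g: "good S (ipd [] (Dl M is u))" using CS_good[OF CS_Dl[OF u]] by simp
  have t: "(Dl M is u \<longlongrightarrow> jc S [] (Dl M is u) x) (at x within interior S)"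
    using jc_tendsto[OF reg x g] by simp
  have "((\<lambda>y. Dl M is u (phi y)) \<longlongrightarrow> jc S [] (Dl M is u) x) (at (Z x) within interior T)"
    by (rule filterlim_compose[OF t filt[OF x]])
  then show "(ipd is (\<lambda>y. u (phi y)) \<longlongrightarrow> jc S [] (Dl M is u) x) (at (Z x) within interior T)"
    by (rule Lim_cong_within[THEN iffD1, rotated -1]) (use ipd_comp[OF u] in auto)
qed

lemma push_eq:
  assumes y: "y \<in> interior T"
  shows "push_metric S Z H y $ a $ b = Wm M H a b (phi y)"
proof -
  have "\<And>i. pd a (\<lambda>y. inv_into S Z y $ i) y = M (phi y) $ i $ a"
    using Dphi_M[OF y] unfolding phi_def by simp
  moreover have "\<And>j. pd b (\<lambda>y. inv_into S Z y $ j) y = M (phi y) $ j $ b"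
    using Dphi_M[OF y] unfolding phi_def by simp
  ultimately show ?thesis unfolding push_metric_def Wm_def phi_def by simp
qed

lemma jc_push:
  assumes H: "\<And>i j. CS S (\<lambda>x. H x $ i $ j)" and x: "x \<in> S"
  shows "jc (Z ` S) is (\<lambda>y. push_metric S Z H y $ a $ b) (Z x) = jc S [] (Dl M is (Wm M H a b)) x"
proof -
  have cw: "CS S (Wm M H a b)" unfolding Wm_eq by (intro CS_sum CS_mult CS_M H finite_UNIV) simp_all
  have "jc T is (\<lambda>y. push_metric S Z H y $ a $ b) (Z x) = jc T is (\<lambda>y. Wm M H a b (phi y)) (Z x)"
    by (rule jc_local_fun) (rule push_eq)
  also have "\<dots> = jc S [] (Dl M is (Wm M H a b)) x" by (rule jc_comp[OF cw x])
  finally show ?thesis unfolding T_def .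
qed

end


context hsp
begin

lemma PP_Dl:
  assumes M: "\<And>k a. PP (\<lambda>x. M1 x $ k $ a) (\<lambda>x. M2 x $ k $ a)" and u: "PP u1 u2"
  shows "PP (Dl M1 is u1) (Dl M2 is u2)"
proof (induction "is")
  case Nil then show ?case using u by simp
next
  case (Cons a "is")
  show ?case unfolding Dl.simps
    by (intro PP_sum PP_mult PP_pd M Cons.IH finite_UNIV) simp_all
qed

lemma part2:
  assumes cs1: "coord_system S Z1" and cs2: "coord_system S Z2"
    and PZ: "\<And>l. PP (\<lambda>x. Z1 x $ l) (\<lambda>x. Z2 x $ l)"
    and H1c: "\<And>i j. CS S (\<lambda>x. H1 x $ i $ j)" and H2c: "\<And>i j. CS S (\<lambda>x. H2 x $ i $ j)"
    and Hj: "\<forall>x\<in>S. x $ N = 0 \<longrightarrow> (\<forall>is i j. jc S is (\<lambda>y. H1 y $ i $ j) x = jc S is (\<lambda>y. H2 y $ i $ j) x)"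
    and x: "x \<in> S" "x $ N = 0"
  shows "jc (Z1 ` S) is (\<lambda>y. push_metric S Z1 H1 y $ a $ b) (Z1 x)
       = jc (Z2 ` S) is (\<lambda>y. push_metric S Z2 H2 y $ a $ b) (Z2 x)"
proof -
  interpret c1: csys N S Z1 by unfold_locales (rule cs1)
  interpret c2: csys N S Z2 by unfold_locales (rule cs2)
  have PH: "PP (\<lambda>x. H1 x $ i $ j) (\<lambda>x. H2 x $ i $ j)" for i j
    unfolding PP_def agr_def Bd_def using H1c H2c Hj by blast
  have PJ: "PP (\<lambda>x. c1.J x $ l $ k) (\<lambda>x. c2.J x $ l $ k)" for l k
    by (rule PP_cong[OF PP_pd[OF PZ, of k]]) (use c1.J_int c2.J_int in auto)
  have PM: "PP (\<lambda>x. c1.M x $ k $ a) (\<lambda>x. c2.M x $ k $ a)" for k a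
  proof (rule PP_cong)
    show "c1.M y $ k $ a = det (MkJ c1.J k a y) / det (c1.J y)" if "y \<in> interior S" for y
      using c1.M_cramer[of y k a] that interior_subset[of S] by auto
    show "c2.M y $ k $ a = det (MkJ c2.J k a y) / det (c2.J y)" if "y \<in> interior S" for y
      using c2.M_cramer[of y k a] that interior_subset[of S] by auto
    show "PP (\<lambda>y. det (MkJ c1.J k a y) / det (c1.J y)) (\<lambda>y. det (MkJ c2.J k a y) / det (c2.J y))"
    proof (rule PP_div)
      show "PP (\<lambda>y. det (MkJ c1.J k a y)) (\<lambda>y. det (MkJ c2.J k a y))"
      proof (rule PP_det)
        fix i j show "PP (\<lambda>y. MkJ c1.J k a y $ i $ j) (\<lambda>y. MkJ c2.J k a y $ i $ j)"
          unfolding MkJ_def vec_lambda_beta by (intro PP_if PP_const PJ)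
      qed
      show "PP (\<lambda>y. det (c1.J y)) (\<lambda>y. det (c2.J y))" by (rule PP_det) (rule PJ)
      show "nzb S (\<lambda>x. det (c1.J x))" by (rule c1.nzb_detJ)
      show "nzb S (\<lambda>x. det (c2.J x))" by (rule c2.nzb_detJ)
    qed
  qed
  have PW: "PP (Wm c1.M H1 a b) (Wm c2.M H2 a b)"
    unfolding Wm_eq by (intro PP_sum PP_mult PM PH finite_UNIV) simp_all
  have PD: "PP (Dl c1.M is (Wm c1.M H1 a b)) (Dl c2.M is (Wm c2.M H2 a b))"
    by (rule PP_Dl[OF PM PW])
  have "jc S [] (Dl c1.M is (Wm c1.M H1 a b)) x = jc S [] (Dl c2.M is (Wm c2.M H2 a b)) x"
    using PD x unfolding PP_def agr_def Bd_def by force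
  then show ?thesis using c1.jc_push[OF H1c x(1)] c2.jc_push[OF H2c x(1)] by simp
qed

end

theorem proposition3p5:
  fixes N :: "'n::finite"
    and \<Omega> :: "(real^'n) set"
    and H1 H2 :: "real^'n \<Rightarrow> real^'n^'n"
    and F1 F2 :: "'n \<Rightarrow> real^'n \<Rightarrow> real"
    and G1 G2 :: "real^'n \<Rightarrow> real"
    and Z1 Z2 :: "real^'n \<Rightarrow> real^'n"
  assumes \<Omega>_open: "openin (top_of_set (halfspace N)) \<Omega>"
    and \<Omega>_meets: "\<Omega> \<inter> {x. x $ N = 0} \<noteq> {}"
    and H1_metric: "riem_metric \<Omega> H1" and H2_metric: "riem_metric \<Omega> H2"
    and H1_form: "normal_form N \<Omega> H1" and H2_form: "normal_form N \<Omega> H2"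
    and H_agree: "\<forall>i j. flat_bdry N \<Omega> (\<lambda>x. H1 x $ i $ j - H2 x $ i $ j)"
    and F1_smooth: "\<forall>l. smooth_upto \<Omega> (F1 l)" and F2_smooth: "\<forall>l. smooth_upto \<Omega> (F2 l)"
    and G1_smooth: "smooth_upto \<Omega> G1" and G2_smooth: "smooth_upto \<Omega> G2"
    and F1_eq: "\<forall>l. \<forall>x\<in>\<Omega>. x $ N > 0 \<longrightarrow> conf_lap H1 (F1 l) x = 0"
    and F2_eq: "\<forall>l. \<forall>x\<in>\<Omega>. x $ N > 0 \<longrightarrow> conf_lap H2 (F2 l) x = 0"
    and G1_eq: "\<forall>x\<in>\<Omega>. x $ N > 0 \<longrightarrow> conf_lap H1 G1 x = 0"
    and G2_eq: "\<forall>x\<in>\<Omega>. x $ N > 0 \<longrightarrow> conf_lap H2 G2 x = 0"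
    and F_cauchy: "\<forall>l. \<forall>x\<in>\<Omega>. x $ N = 0 \<longrightarrow>
                     F1 l x = F2 l x \<and> jc \<Omega> [N] (F1 l) x = jc \<Omega> [N] (F2 l) x"
    and G_cauchy: "\<forall>x\<in>\<Omega>. x $ N = 0 \<longrightarrow> G1 x = G2 x \<and> jc \<Omega> [N] G1 x = jc \<Omega> [N] G2 x"
    and G1_nz: "\<forall>x\<in>\<Omega>. G1 x \<noteq> 0" and G2_nz: "\<forall>x\<in>\<Omega>. G2 x \<noteq> 0"
    and Z1_def: "\<forall>x. Z1 x = (\<chi> l. F1 l x / G1 x)"
    and Z2_def: "\<forall>x. Z2 x = (\<chi> l. F2 l x / G2 x)"
  shows "(\<forall>l. flat_bdry N \<Omega> (\<lambda>x. Z1 x $ l - Z2 x $ l))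
       \<and> ((coord_system \<Omega> Z1 \<and> coord_system \<Omega> Z2 \<and>
           (\<forall>x\<in>\<Omega>. x $ N = 0 \<longrightarrow> (\<forall>is i j.
               jc \<Omega> is (\<lambda>y. H1 y $ i $ j) x = jc \<Omega> is (\<lambda>y. H2 y $ i $ j) x)))
          \<longrightarrow> (\<forall>x\<in>\<Omega>. x $ N = 0 \<longrightarrow> Z1 x = Z2 x \<and>
                (\<forall>is a b. jc (Z1 ` \<Omega>) is (\<lambda>y. push_metric \<Omega> Z1 H1 y $ a $ b) (Z1 x)
                        = jc (Z2 ` \<Omega>) is (\<lambda>y. push_metric \<Omega> Z2 H2 y $ a $ b) (Z2 x))))"
proof -
  interpret hsp N \<Omega> by (intro hsp.intro \<Omega>_open su_reg[OF G1_smooth])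
  have PF: "PP (\<lambda>x. F1 l x / G1 x) (\<lambda>x. F2 l x / G2 x)" for l
    by (rule part1[OF H1_metric H2_metric H1_form H2_form H_agree F1_smooth F2_smooth G1_smooth G2_smooth
          F1_eq F2_eq G1_eq G2_eq F_cauchy G_cauchy G1_nz G2_nz])
  have e1: "(\<lambda>x. Z1 x $ l) = (\<lambda>x. F1 l x / G1 x)" for l using Z1_def by simp
  have e2: "(\<lambda>x. Z2 x $ l) = (\<lambda>x. F2 l x / G2 x)" for l using Z2_def by simp
  have PZ: "PP (\<lambda>x. Z1 x $ l) (\<lambda>x. Z2 x $ l)" for l unfolding e1 e2 by (rule PF)
  have H1c: "CS \<Omega> (\<lambda>x. H1 x $ i $ j)" for i j using H1_metric unfolding riem_metric_def by (auto intro: su_CS)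
  have H2c: "CS \<Omega> (\<lambda>x. H2 x $ i $ j)" for i j using H2_metric unfolding riem_metric_def by (auto intro: su_CS)
  have A: "\<forall>l. flat_bdry N \<Omega> (\<lambda>x. Z1 x $ l - Z2 x $ l)" using PP_flat[OF PZ] by blast
  have B: "(\<forall>x\<in>\<Omega>. x $ N = 0 \<longrightarrow> Z1 x = Z2 x \<and>
                (\<forall>is a b. jc (Z1 ` \<Omega>) is (\<lambda>y. push_metric \<Omega> Z1 H1 y $ a $ b) (Z1 x)
                        = jc (Z2 ` \<Omega>) is (\<lambda>y. push_metric \<Omega> Z2 H2 y $ a $ b) (Z2 x)))"
    if h: "coord_system \<Omega> Z1 \<and> coord_system \<Omega> Z2 \<and>
           (\<forall>x\<in>\<Omega>. x $ N = 0 \<longrightarrow> (\<forall>is i j. jc \<Omega> is (\<lambda>y. H1 y $ i $ j) x = jc \<Omega> is (\<lambda>y. H2 y $ i $ j) x))"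
  proof (intro ballI impI conjI allI)
    fix x assume x: "x \<in> \<Omega>" "x $ N = 0"
    show "Z1 x = Z2 x" using Z1_def Z2_def F_cauchy G_cauchy x by (simp add: vec_eq_iff)
    fix "is" a b
    show "jc (Z1 ` \<Omega>) is (\<lambda>y. push_metric \<Omega> Z1 H1 y $ a $ b) (Z1 x)
                        = jc (Z2 ` \<Omega>) is (\<lambda>y. push_metric \<Omega> Z2 H2 y $ a $ b) (Z2 x)"
      by (rule part2[OF _ _ PZ H1c H2c _ x]) (use h in auto)
  qed
  show ?thesis using A B by blast
qed


end
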